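(* Let $H=H(x,y)$ be a two-terminal signed graph with $x\neq y$ containing an edge $e$ joining $x$ and $y$. Let $G$ be obtained from $H$ by adding a new vertex $z$ and new edges $yz$ and $xz$ (so $G=\mathcal P(H\cup yz,\,xz)$, a two-terminal signed graph with terminals $x,z$), and suppose that the triangle formed by $e$, $yz$, $zx$ is unbalanced. If $H\sim R_i(x,y)$ for some $i\in\{2,4,5\}$, or $H$ has a $\Psi^*_{xy}(2)$-cover with respect to $e$, then $G$ has a $\Psi^*_{xz}(2)$-cover with respect to the edge $xz$.
   Context: Signed graph: a finite graph (multiple edges and loops allowed) with signature $\sigma:E\to\{1,-1\}$. For a subgraph $S$, $\sigma(S)=\prod_{e\in S}\sigma(e)$; a path is positive if its sign is $1$, negative otherwise. A circuit is a connected $2$-regular subgraph; balanced if it has an even number of negative edges, unbalanced otherwise. A barbell is the union of two unbalanced circuits $C_1,C_2$ and a path $P$ such that either $P$ is trivial and $C_1,C_2$ share exactly one vertex, or $C_1,C_2$ are vertex-disjoint and $P$ joins them meeting $C_1\cup C_2$ only at its ends. A signed circuit is a balanced circuit or a barbell. A tadpole at $x$ is the union of an $xw$-path $P$ (possibly trivial), called the tadpole-path, and an unbalanced circuit $C$ with $V(P)\cap V(C)=\{w\}$. A signed subgraph $6$-cover is a family (multiset) of subgraphs covering each edge exactly $6$ times. For distinct $x,y$ and $t\in[0,3]$, a $\Psi_{xy}(t)$-cover is a signed subgraph $6$-cover consisting of exactly $t$ positive $xy$-paths, $t$ negative $xy$-paths, $t$ tadpoles at $x$, $6-2t$ tadpoles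 at $y$, and some signed circuits. If $e$ is an edge joining $x$ and $y$, a $\Psi^*_{xy}(2)$-cover with respect to $e$ is a $\Psi_{xy}(2)$-cover such that for each $u\in\{x,y\}$, with $u'$ the other vertex of $\{x,y\}$, one of the two tadpoles at $u$ does not contain $u'$ and the tadpole-path of the other tadpole at $u$ contains $e$. Switching at a vertex $v$ reverses the signs of all edges incident with $v$; two signed graphs are equivalent if one is obtained from the other by a sequence of switchings. For a two-terminal signed graph $H(u,v)$, $H\sim R_i(x,y)$ means $H$ is equivalent to a signed graph isomorphic to $R_i$ via an isomorphism sending $u\mapsto x$, $v\mapsto y$. The signed graphs $R_i$ with specified vertices $x,y$ are: $R_2$: vertices $x,y,w$, positive edges $xy,xw,wy$ and a negative edge $wy$ parallel to the positive one. $R_4$: vertices $x,y,a,b$, positive edges $xa,ab,by,xy,xb$ and a negative edge $ab$ parallel to the positive one. $R_5$: vertices $x,y,b,c,d$, positive edges $xc,cd,db,xb,xy,yb$ and a negative edge $cd$ parallel to the positive one. *)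

theory Defs
  imports Main
begin

text \<open>Signed graphs with multiple edges and loops. An edge f has an end set
  ends f of cardinality 1 (loop) or 2; its sign sgn f is 1 or -1.\<close>

record ('v,'e) sgraph =
  verts :: "'v set"
  edges :: "'e set"
  ends  :: "'e \<Rightarrow> 'v set"
  sgn   :: "'e \<Rightarrow> int"

definition wf_sgraph :: "('v,'e) sgraph \<Rightarrow> bool" where
  "wf_sgraph G \<longleftrightarrow> finite (verts G) \<and> finite (edges G) \<and>
     (\<forall>f\<in>edges G. ends G f \<subseteq> verts G \<and> card (ends G f) \<in> {1,2} \<and> sgn G f \<in> {1,-1})"

type_synonym ('v,'e) subgraph = "'v set \<times> 'e set"

definition sigma :: "('v,'e) sgraph \<Rightarrow> ('v,'e) subgraph \<Rightarrow> int" where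
  "sigma G S = (\<Prod>f\<in>snd S. sgn G f)"

definition path_seq :: "('v,'e) sgraph \<Rightarrow> 'v list \<Rightarrow> 'e list \<Rightarrow> bool" where
  "path_seq G vs es \<longleftrightarrow> length vs = Suc (length es) \<and> distinct vs \<and> distinct es \<and>
     set vs \<subseteq> verts G \<and> set es \<subseteq> edges G \<and>
     (\<forall>i<length es. ends G (es!i) = {vs!i, vs!Suc i})"

definition is_path :: "('v,'e) sgraph \<Rightarrow> 'v \<Rightarrow> 'v \<Rightarrow> ('v,'e) subgraph \<Rightarrow> bool" where
  "is_path G a b P \<longleftrightarrow> (\<exists>vs es. path_seq G vs es \<and> hd vs = a \<and> last vs = b \<and>
      P = (set vs, set es))"

text \<open>Circuit = connected 2-regular subgraph (loops and digons allowed).\<close>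
definition is_circuit :: "('v,'e) sgraph \<Rightarrow> ('v,'e) subgraph \<Rightarrow> bool" where
  "is_circuit G C \<longleftrightarrow> (\<exists>vs es. vs \<noteq> [] \<and> length es = length vs \<and> distinct vs \<and> distinct es \<and>
      set vs \<subseteq> verts G \<and> set es \<subseteq> edges G \<and>
      (\<forall>i<length es. ends G (es!i) = {vs!i, vs!((Suc i) mod length vs)}) \<and>
      C = (set vs, set es))"

definition balanced_circuit :: "('v,'e) sgraph \<Rightarrow> ('v,'e) subgraph \<Rightarrow> bool" where
  "balanced_circuit G C \<longleftrightarrow> is_circuit G C \<and> sigma G C = 1"

definition unbalanced_circuit :: "('v,'e) sgraph \<Rightarrow> ('v,'e) subgraph \<Rightarrow> bool" where
  "unbalanced_circuit G C \<longleftrightarrow> is_circuit G C \<and> sigma G C = -1"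

definition is_barbell :: "('v,'e) sgraph \<Rightarrow> ('v,'e) subgraph \<Rightarrow> bool" where
  "is_barbell G B \<longleftrightarrow> (\<exists>C1 C2 P.
      unbalanced_circuit G C1 \<and> unbalanced_circuit G C2 \<and> snd C1 \<inter> snd C2 = {} \<and>
      ((\<exists>v. P = ({v}, {}) \<and> fst C1 \<inter> fst C2 = {v}) \<or>
       (fst C1 \<inter> fst C2 = {} \<and>
        (\<exists>a b. a \<in> fst C1 \<and> b \<in> fst C2 \<and> is_path G a b P \<and>
               fst P \<inter> (fst C1 \<union> fst C2) = {a, b}))) \<and>
      B = (fst C1 \<union> fst C2 \<union> fst P, snd C1 \<union> snd C2 \<union> snd P))"

definition signed_circuit :: "('v,'e) sgraph \<Rightarrow> ('v,'e) subgraph \<Rightarrow> bool" where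
  "signed_circuit G S \<longleftrightarrow> balanced_circuit G S \<or> is_barbell G S"

definition tadpole_pc :: "('v,'e) sgraph \<Rightarrow> 'v \<Rightarrow> ('v,'e) subgraph \<Rightarrow> ('v,'e) subgraph \<Rightarrow> bool" where
  "tadpole_pc G x P C \<longleftrightarrow> (\<exists>w. is_path G x w P \<and> unbalanced_circuit G C \<and> fst P \<inter> fst C = {w})"

definition is_tadpole :: "('v,'e) sgraph \<Rightarrow> 'v \<Rightarrow> ('v,'e) subgraph \<Rightarrow> bool" where
  "is_tadpole G x T \<longleftrightarrow> (\<exists>P C. tadpole_pc G x P C \<and> T = (fst P \<union> fst C, snd P \<union> snd C))"

definition tadpole_path_contains :: "('v,'e) sgraph \<Rightarrow> 'v \<Rightarrow> ('v,'e) subgraph \<Rightarrow> 'e \<Rightarrow> bool" where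
  "tadpole_path_contains G x T e \<longleftrightarrow>
     (\<exists>P C. tadpole_pc G x P C \<and> T = (fst P \<union> fst C, snd P \<union> snd C) \<and> e \<in> snd P)"

text \<open>A family (list = multiset) of subgraphs covering every edge exactly 6 times.\<close>
definition cover6 :: "('v,'e) sgraph \<Rightarrow> ('v,'e) subgraph list \<Rightarrow> bool" where
  "cover6 G Ss \<longleftrightarrow> (\<forall>f\<in>edges G. length (filter (\<lambda>S. f \<in> snd S) Ss) = 6)"

definition psi_cover :: "('v,'e) sgraph \<Rightarrow> 'v \<Rightarrow> 'v \<Rightarrow> nat \<Rightarrow>
   ('v,'e) subgraph list \<Rightarrow> ('v,'e) subgraph list \<Rightarrow> ('v,'e) subgraph list \<Rightarrow>
   ('v,'e) subgraph list \<Rightarrow> ('v,'e) subgraph list \<Rightarrow> bool" where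
  "psi_cover G x y t pp np tx ty sc \<longleftrightarrow>
     length pp = t \<and> length np = t \<and> length tx = t \<and> length ty = 6 - 2 * t \<and>
     (\<forall>P\<in>set pp. is_path G x y P \<and> sigma G P = 1) \<and>
     (\<forall>P\<in>set np. is_path G x y P \<and> sigma G P = -1) \<and>
     (\<forall>T\<in>set tx. is_tadpole G x T) \<and>
     (\<forall>T\<in>set ty. is_tadpole G y T) \<and>
     (\<forall>S\<in>set sc. signed_circuit G S) \<and>
     cover6 G (pp @ np @ tx @ ty @ sc)"

definition star_cond :: "('v,'e) sgraph \<Rightarrow> 'v \<Rightarrow> 'v \<Rightarrow> 'e \<Rightarrow> ('v,'e) subgraph list \<Rightarrow> bool" where
  "star_cond G u u' e ts \<longleftrightarrow> (\<exists>T1 T2. ts = [T1, T2] \<and>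
     ((u' \<notin> fst T1 \<and> tadpole_path_contains G u T2 e) \<or>
      (u' \<notin> fst T2 \<and> tadpole_path_contains G u T1 e)))"

definition has_psi_star2 :: "('v,'e) sgraph \<Rightarrow> 'v \<Rightarrow> 'v \<Rightarrow> 'e \<Rightarrow> bool" where
  "has_psi_star2 G x y e \<longleftrightarrow> (\<exists>pp np tx ty sc. psi_cover G x y 2 pp np tx ty sc \<and>
      star_cond G x y e tx \<and> star_cond G y x e ty)"

text \<open>Switching. Loops keep their sign (their sign is reversed twice).\<close>
definition switch_at :: "('v,'e) sgraph \<Rightarrow> 'v \<Rightarrow> ('v,'e) sgraph" where
  "switch_at G v = G\<lparr>sgn := (\<lambda>f. if v \<in> ends G f \<and> card (ends G f) = 2 then - sgn G f else sgn G f)\<rparr>"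

definition sw_equiv :: "('v,'e) sgraph \<Rightarrow> ('v,'e) sgraph \<Rightarrow> bool" where
  "sw_equiv = (\<lambda>A B. \<exists>v\<in>verts A. B = switch_at A v)\<^sup>*\<^sup>*"

definition iso_2t :: "('v,'e) sgraph \<Rightarrow> 'v \<Rightarrow> 'v \<Rightarrow> ('w,'f) sgraph \<Rightarrow> 'w \<Rightarrow> 'w \<Rightarrow> bool" where
  "iso_2t G a b R ra rb \<longleftrightarrow> (\<exists>\<phi> \<psi>. bij_betw \<phi> (verts G) (verts R) \<and> bij_betw \<psi> (edges G) (edges R) \<and>
     (\<forall>f\<in>edges G. ends R (\<psi> f) = \<phi> ` ends G f \<and> sgn R (\<psi> f) = sgn G f) \<and>
     \<phi> a = ra \<and> \<phi> b = rb)"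

definition sim_R :: "('v,'e) sgraph \<Rightarrow> 'v \<Rightarrow> 'v \<Rightarrow> ('w,'f) sgraph \<Rightarrow> 'w \<Rightarrow> 'w \<Rightarrow> bool" where
  "sim_R H u v R rx ry \<longleftrightarrow> (\<exists>H'. sw_equiv H H' \<and> iso_2t H' u v R rx ry)"

definition mk_sg :: "nat \<Rightarrow> (nat \<times> nat \<times> int) list \<Rightarrow> (nat, nat) sgraph" where
  "mk_sg n L = \<lparr>verts = {..<n}, edges = {..<length L},
     ends = (\<lambda>i. {fst (L!i), fst (snd (L!i))}), sgn = (\<lambda>i. snd (snd (L!i)))\<rparr>"

text \<open>R2: x=0, y=1, w=2.\<close>
definition R2 :: "(nat, nat) sgraph" where
  "R2 = mk_sg 3 [(0,1,1), (0,2,1), (2,1,1), (2,1,-1)]"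

text \<open>R4: x=0, y=1, a=2, b=3.\<close>
definition R4 :: "(nat, nat) sgraph" where
  "R4 = mk_sg 4 [(0,2,1), (2,3,1), (3,1,1), (0,1,1), (0,3,1), (2,3,-1)]"

text \<open>R5: x=0, y=1, b=2, c=3, d=4.\<close>
definition R5 :: "(nat, nat) sgraph" where
  "R5 = mk_sg 5 [(0,3,1), (3,4,1), (4,2,1), (0,2,1), (0,1,1), (1,2,1), (3,4,-1)]"

end

theory Submission
  imports Defs
begin


lemma path_seq_Nil: "path_seq G vs [] \<longleftrightarrow> (\<exists>v. vs = [v] \<and> v \<in> verts G)"
  unfolding path_seq_def by (cases vs) auto

lemma path_seq_Cons: "path_seq G (v # vs) (f # es) \<longleftrightarrow>
   path_seq G vs es \<and> v \<notin> set vs \<and> f \<notin> set es \<and> v \<in> verts G \<and> f \<in> edges G \<and> ends G f = {v, hd vs}"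
proof
  assume H: "path_seq G (v # vs) (f # es)"
  then have L: "length vs = Suc (length es)" by (simp add: path_seq_def)
  then have "vs \<noteq> []" by auto
  from H have E: "\<And>i. i < Suc (length es) \<Longrightarrow> ends G ((f#es)!i) = {(v#vs)!i, (v#vs)!Suc i}"
    by (simp add: path_seq_def)
  have "ends G f = {v, hd vs}" using E[of 0] \<open>vs \<noteq> []\<close> by (simp add: hd_conv_nth)
  moreover have "\<forall>i<length es. ends G (es!i) = {vs!i, vs!Suc i}" using E by fastforce
  ultimately show "path_seq G vs es \<and> v \<notin> set vs \<and> f \<notin> set es \<and> v \<in> verts G \<and> f \<in> edges G \<and> ends G f = {v, hd vs}"
    using H L by (simp add: path_seq_def)
next
  assume H: "path_seq G vs es \<and> v \<notin> set vs \<and> f \<notin> set es \<and> v \<in> verts G \<and> f \<in> edges G \<and> ends G f = {v, hd vs}"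
  then have L: "length vs = Suc (length es)" by (simp add: path_seq_def)
  then have "vs \<noteq> []" by auto
  have "\<forall>i<length (f#es). ends G ((f#es)!i) = {(v#vs)!i, (v#vs)!Suc i}"
  proof (intro allI impI)
    fix i assume "i < length (f#es)"
    then show "ends G ((f#es)!i) = {(v#vs)!i, (v#vs)!Suc i}"
      using H \<open>vs \<noteq> []\<close> by (cases i) (auto simp: path_seq_def hd_conv_nth)
  qed
  then show "path_seq G (v # vs) (f # es)" using H L by (simp add: path_seq_def)
qed

lemma path_seq_Cons_Nil: "path_seq G [u, v] [f] \<longleftrightarrow>
   u \<noteq> v \<and> u \<in> verts G \<and> v \<in> verts G \<and> f \<in> edges G \<and> ends G f = {u, v}"
  by (auto simp: path_seq_Cons path_seq_Nil)

lemma path_seq_len: "path_seq G vs es \<Longrightarrow> length vs = Suc (length es)"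
  by (simp add: path_seq_def)

lemma path_seq_snoc: "path_seq G vs es \<Longrightarrow> v \<notin> set vs \<Longrightarrow> f \<notin> set es \<Longrightarrow> v \<in> verts G \<Longrightarrow>
   f \<in> edges G \<Longrightarrow> ends G f = {last vs, v} \<Longrightarrow> path_seq G (vs @ [v]) (es @ [f])"
proof (induction es arbitrary: vs)
  case Nil
  then obtain u where "vs = [u]" "u \<in> verts G" by (auto simp: path_seq_Nil)
  then show ?case using Nil by (auto simp: path_seq_Cons path_seq_Nil)
next
  case (Cons g es)
  then obtain u vs' where vs: "vs = u # vs'" using path_seq_len[OF Cons.prems(1)] by (cases vs) auto
  with Cons.prems have P: "path_seq G vs' es" "u \<notin> set vs'" "g \<notin> set es" "u \<in> verts G" "g \<in> edges G"
    "ends G g = {u, hd vs'}" by (auto simp: path_seq_Cons)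
  have "vs' \<noteq> []" using P(1) path_seq_len by fastforce
  have IH: "path_seq G (vs' @ [v]) (es @ [f])"
    using Cons.IH[OF P(1)] Cons.prems vs \<open>vs' \<noteq> []\<close> by auto
  show ?case using IH P Cons.prems vs \<open>vs' \<noteq> []\<close> by (auto simp: path_seq_Cons)
qed

lemma path_seq_edge_ends: "path_seq G vs es \<Longrightarrow> g \<in> set es \<Longrightarrow> ends G g \<subseteq> set vs"
proof -
  assume P: "path_seq G vs es" and g: "g \<in> set es"
  then obtain i where i: "i < length es" "g = es!i" by (auto simp: in_set_conv_nth)
  then have "ends G g = {vs!i, vs!Suc i}" using P by (simp add: path_seq_def)
  moreover have "Suc i < length vs" using P i by (simp add: path_seq_def)
  ultimately show ?thesis by auto
qed

lemma path_seq_sub: "path_seq G vs es \<Longrightarrow> set vs \<subseteq> verts G \<and> set es \<subseteq> edges G"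
  by (simp add: path_seq_def)

lemma close_circuit:
  assumes "path_seq G vs es" "g \<in> edges G" "g \<notin> set es" "ends G g = {last vs, hd vs}"
  shows "is_circuit G (set vs, set (es @ [g]))"
proof -
  have L: "length vs = Suc (length es)" using assms(1) by (simp add: path_seq_def)
  then have "vs \<noteq> []" by auto
  have "\<forall>i<length (es@[g]). ends G ((es@[g])!i) = {vs!i, vs!((Suc i) mod length vs)}"
  proof (intro allI impI)
    fix i assume "i < length (es@[g])"
    then consider "i < length es" | "i = length es" by fastforce
    then show "ends G ((es@[g])!i) = {vs!i, vs!((Suc i) mod length vs)}"
    proof cases
      case 1 then show ?thesis using assms(1) L by (simp add: path_seq_def nth_append)
    next
      case 2 then show ?thesis using assms(4) L \<open>vs \<noteq> []\<close> by (simp add: nth_append hd_conv_nth last_conv_nth)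
    qed
  qed
  then show ?thesis unfolding is_circuit_def using assms L
    by (intro exI[of _ vs] exI[of _ "es@[g]"]) (auto simp: path_seq_def)
qed

lemma circuit_edge_ends: "is_circuit G C \<Longrightarrow> g \<in> snd C \<Longrightarrow> ends G g \<subseteq> fst C"
proof -
  assume "is_circuit G C" "g \<in> snd C"
  then obtain vs es where C: "vs \<noteq> []" "length es = length vs" "C = (set vs, set es)"
    "\<forall>i<length es. ends G (es!i) = {vs!i, vs!((Suc i) mod length vs)}" and g: "g \<in> set es"
    unfolding is_circuit_def by auto
  then obtain i where i: "i < length es" "g = es!i" by (auto simp: in_set_conv_nth)
  then show ?thesis using C by auto
qed

lemma circuit_sub: "is_circuit G C \<Longrightarrow> fst C \<subseteq> verts G \<and> snd C \<subseteq> edges G \<and> finite (snd C) \<and> finite (fst C)"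
  unfolding is_circuit_def by auto

lemma is_path_sub: "is_path G a b P \<Longrightarrow> fst P \<subseteq> verts G \<and> snd P \<subseteq> edges G \<and> finite (snd P) \<and> finite (fst P) \<and> a \<in> fst P \<and> b \<in> fst P"
  unfolding is_path_def path_seq_def by (auto; metis Zero_not_Suc hd_in_set last_in_set length_0_conv)

lemma is_pathI: "path_seq G vs es \<Longrightarrow> hd vs = a \<Longrightarrow> last vs = b \<Longrightarrow> is_path G a b (set vs, set es)"
  unfolding is_path_def by blast

lemma sigma_insert: "finite E \<Longrightarrow> g \<notin> E \<Longrightarrow> sigma G (V, insert g E) = sgn G g * sigma G (V', E)"
  by (simp add: sigma_def)

lemma sigma_empty: "sigma G (V, {}) = 1" by (simp add: sigma_def)

lemma prod_set_nth: "distinct es \<Longrightarrow> (\<Prod>f\<in>set es. h f) = (\<Prod>i<length es. h (es!i))"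
proof -
  assume d: "distinct es"
  have "set es = (!) es ` {..<length es}" by (auto simp: in_set_conv_nth)
  moreover have "inj_on ((!) es) {..<length es}" using d by (simp add: inj_on_nth)
  ultimately show ?thesis by (simp add: prod.reindex)
qed



definition emb :: "('v,'e) sgraph \<Rightarrow> ('w,'f) sgraph \<Rightarrow> ('v \<Rightarrow> 'w) \<Rightarrow> ('e \<Rightarrow> 'f) \<Rightarrow> ('v \<Rightarrow> int) \<Rightarrow> bool" where
  "emb A B \<phi> \<psi> \<tau> \<longleftrightarrow> inj_on \<phi> (verts A) \<and> \<phi> ` verts A \<subseteq> verts B \<and> inj_on \<psi> (edges A) \<and> \<psi> ` edges A \<subseteq> edges B \<and>
    (\<forall>f\<in>edges A. ends B (\<psi> f) = \<phi> ` ends A f) \<and>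
    (\<forall>f\<in>edges A. \<forall>a b. ends A f = {a,b} \<longrightarrow> sgn B (\<psi> f) = sgn A f * \<tau> a * \<tau> b) \<and>
    (\<forall>a. \<tau> a = 1 \<or> \<tau> a = -1)"

definition mapS :: "('v \<Rightarrow> 'w) \<Rightarrow> ('e \<Rightarrow> 'f) \<Rightarrow> ('v,'e) subgraph \<Rightarrow> ('w,'f) subgraph" where
  "mapS \<phi> \<psi> S = (\<phi> ` fst S, \<psi> ` snd S)"

lemma tel: "(\<And>i. g i * g i = (1::int)) \<Longrightarrow> (\<Prod>i<n. g i * g (Suc i)) = g 0 * g n"
proof (induction n)
  case 0 then show ?case by simp
next
  case (Suc n)
  have "(\<Prod>i<Suc n. g i * g (Suc i)) = g 0 * (g n * g n) * g (Suc n)" using Suc by (simp add: mult.assoc)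
  then show ?case using Suc.prems by simp
qed

lemma tau_sq: "emb A B \<phi> \<psi> \<tau> \<Longrightarrow> \<tau> a * \<tau> a = 1"
  unfolding emb_def by (metis mult_minus_left mult_minus_right mult_1_left minus_minus)

lemma emb_imgV: "emb A B \<phi> \<psi> \<tau> \<Longrightarrow> X \<subseteq> verts A \<Longrightarrow> \<phi> ` X \<subseteq> verts B"
  unfolding emb_def by (meson image_mono subset_trans)

lemma emb_imgE: "emb A B \<phi> \<psi> \<tau> \<Longrightarrow> X \<subseteq> edges A \<Longrightarrow> \<psi> ` X \<subseteq> edges B"
  unfolding emb_def by (meson image_mono subset_trans)

lemma emb_path_seq:
  assumes E: "emb A B \<phi> \<psi> \<tau>" and P: "path_seq A vs es"
  shows "path_seq B (map \<phi> vs) (map \<psi> es)"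
proof -
  have iv: "inj_on \<phi> (set vs)" using E P unfolding emb_def path_seq_def by (meson inj_on_subset)
  have ie: "inj_on \<psi> (set es)" using E P unfolding emb_def path_seq_def by (meson inj_on_subset)
  have "\<forall>i<length es. ends B (\<psi> (es!i)) = {\<phi> (vs!i), \<phi> (vs!Suc i)}"
    using E P unfolding emb_def path_seq_def by (metis (no_types, lifting) image_empty image_insert nth_mem subset_iff)
  moreover have "set (map \<phi> vs) \<subseteq> verts B"
  proof -
    have "set vs \<subseteq> verts A" using P by (simp add: path_seq_def)
    then have "\<phi> ` set vs \<subseteq> \<phi> ` verts A" by (rule image_mono)
    moreover have "\<phi> ` verts A \<subseteq> verts B" using E by (simp add: emb_def)
    ultimately show ?thesis by simp
  qed
  moreover have "set (map \<psi> es) \<subseteq> edges B"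
  proof -
    have "set es \<subseteq> edges A" using P by (simp add: path_seq_def)
    then have "\<psi> ` set es \<subseteq> \<psi> ` edges A" by (rule image_mono)
    moreover have "\<psi> ` edges A \<subseteq> edges B" using E by (simp add: emb_def)
    ultimately show ?thesis by simp
  qed
  ultimately show ?thesis using P iv ie unfolding path_seq_def
    by (auto simp: distinct_map)
qed

lemma emb_sgn_nth:
  assumes E: "emb A B \<phi> \<psi> \<tau>" and "f \<in> edges A" "ends A f = {a, b}"
  shows "sgn B (\<psi> f) = sgn A f * (\<tau> a * \<tau> b)"
  using assms unfolding emb_def by (simp add: mult.assoc)

lemma emb_path_sigma:
  assumes E: "emb A B \<phi> \<psi> \<tau>" and P: "path_seq A vs es"
  shows "sigma B (set (map \<phi> vs), set (map \<psi> es)) = sigma A (set vs, set es) * \<tau> (hd vs) * \<tau> (last vs)"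
proof -
  have L: "length vs = Suc (length es)" using P by (simp add: path_seq_def)
  have d: "distinct (map \<psi> es)" using emb_path_seq[OF E P] by (simp add: path_seq_def)
  have d2: "distinct es" using P by (simp add: path_seq_def)
  have "sigma B (set (map \<phi> vs), set (map \<psi> es)) = (\<Prod>i<length es. sgn B (\<psi> (es!i)))"
    unfolding sigma_def using prod_set_nth[OF d, of "sgn B"] by simp
  also have "\<dots> = (\<Prod>i<length es. sgn A (es!i) * (\<tau> (vs!i) * \<tau> (vs!Suc i)))"
  proof (rule prod.cong)
    fix i assume "i \<in> {..<length es}"
    then show "sgn B (\<psi> (es!i)) = sgn A (es!i) * (\<tau> (vs!i) * \<tau> (vs!Suc i))"
      using P by (intro emb_sgn_nth[OF E]) (auto simp: path_seq_def)
  qed simp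
  also have "\<dots> = (\<Prod>i<length es. sgn A (es!i)) * (\<Prod>i<length es. \<tau> (vs!i) * \<tau> (vs!Suc i))"
    by (simp add: prod.distrib)
  also have "(\<Prod>i<length es. \<tau> (vs!i) * \<tau> (vs!Suc i)) = \<tau> (vs!0) * \<tau> (vs!length es)"
    using tel[of "\<lambda>i. \<tau> (vs!i)"] tau_sq[OF E] by blast
  also have "(\<Prod>i<length es. sgn A (es!i)) = sigma A (set vs, set es)"
    unfolding sigma_def using prod_set_nth[OF d2, of "sgn A"] by simp
  moreover have "vs \<noteq> []" using L by auto
  moreover have "vs!0 = hd vs" "vs!length es = last vs" using L \<open>vs \<noteq> []\<close>
    by (simp_all add: hd_conv_nth last_conv_nth)
  ultimately show ?thesis by (simp add: mult.assoc)
qed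

lemma emb_is_path:
  assumes E: "emb A B \<phi> \<psi> \<tau>" and P: "is_path A a b S"
  shows "is_path B (\<phi> a) (\<phi> b) (mapS \<phi> \<psi> S) \<and> sigma B (mapS \<phi> \<psi> S) = sigma A S * \<tau> a * \<tau> b"
proof -
  obtain vs es where V: "path_seq A vs es" "hd vs = a" "last vs = b" "S = (set vs, set es)"
    using P unfolding is_path_def by blast
  have "vs \<noteq> []" using V(1) by (auto simp: path_seq_def)
  have M: "mapS \<phi> \<psi> S = (set (map \<phi> vs), set (map \<psi> es))" using V by (simp add: mapS_def)
  have "is_path B (\<phi> a) (\<phi> b) (mapS \<phi> \<psi> S)" unfolding is_path_def M
    using emb_path_seq[OF E V(1)] V \<open>vs \<noteq> []\<close>
    by (intro exI[of _ "map \<phi> vs"] exI[of _ "map \<psi> es"]) (auto simp: hd_map last_map)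
  then show ?thesis using emb_path_sigma[OF E V(1)] V M by simp
qed

lemma emb_is_circuit:
  assumes E: "emb A B \<phi> \<psi> \<tau>" and C: "is_circuit A S"
  shows "is_circuit B (mapS \<phi> \<psi> S) \<and> sigma B (mapS \<phi> \<psi> S) = sigma A S"
proof -
  obtain vs es where V: "vs \<noteq> []" "length es = length vs" "distinct vs" "distinct es"
      "set vs \<subseteq> verts A" "set es \<subseteq> edges A"
      "\<forall>i<length es. ends A (es!i) = {vs!i, vs!((Suc i) mod length vs)}" "S = (set vs, set es)"
    using C unfolding is_circuit_def by blast
  have iv: "inj_on \<phi> (set vs)" using E V unfolding emb_def by (meson inj_on_subset)
  have ie: "inj_on \<psi> (set es)" using E V unfolding emb_def by (meson inj_on_subset)
  have EB: "\<forall>i<length es. ends B (\<psi> (es!i)) = {\<phi> (vs!i), \<phi> (vs!((Suc i) mod length vs))}"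
    using E V unfolding emb_def by (metis (no_types, lifting) image_empty image_insert nth_mem subset_iff)
  have M: "mapS \<phi> \<psi> S = (set (map \<phi> vs), set (map \<psi> es))" using V by (simp add: mapS_def)
  have circ: "is_circuit B (mapS \<phi> \<psi> S)" unfolding is_circuit_def M
    using V iv ie EB emb_imgV[OF E V(5)] emb_imgE[OF E V(6)]
    by (intro exI[of _ "map \<phi> vs"] exI[of _ "map \<psi> es"]) (auto simp: distinct_map)
  obtain k where k: "length vs = Suc k" using V(1) by (cases vs) auto
  define g where "g i = \<tau> (vs!i)" for i
  have d: "distinct (map \<psi> es)" using V ie by (simp add: distinct_map)
  have "sigma B (mapS \<phi> \<psi> S) = (\<Prod>i<length es. sgn B (\<psi> (es!i)))"
    unfolding sigma_def M using prod_set_nth[OF d, of "sgn B"] by simp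
  also have "\<dots> = (\<Prod>i<length es. sgn A (es!i) * (g i * g ((Suc i) mod length vs)))"
  proof (rule prod.cong)
    fix i assume "i \<in> {..<length es}"
    then show "sgn B (\<psi> (es!i)) = sgn A (es!i) * (g i * g ((Suc i) mod length vs))"
      using V unfolding g_def by (intro emb_sgn_nth[OF E]) auto
  qed simp
  also have "\<dots> = (\<Prod>i<length es. sgn A (es!i)) * ((\<Prod>i<Suc k. g i) * (\<Prod>i<Suc k. g ((Suc i) mod Suc k)))"
    unfolding prod.distrib V(2) k by (simp only: mult.assoc)
  also have "(\<Prod>i<Suc k. g ((Suc i) mod Suc k)) = (\<Prod>i<Suc k. g i)"
  proof -
    have "(\<Prod>i<Suc k. g ((Suc i) mod Suc k)) = (\<Prod>i<k. g ((Suc i) mod Suc k)) * g 0"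
      by (simp only: prod.lessThan_Suc mod_self)
    also have "(\<Prod>i<k. g ((Suc i) mod Suc k)) = (\<Prod>i<k. g (Suc i))" by (rule prod.cong) auto
    also have "(\<Prod>i<Suc k. g i) = g 0 * (\<Prod>i<k. g (Suc i))" by (rule prod.lessThan_Suc_shift)
    ultimately show ?thesis by (simp only: mult.commute)
  qed
  also have "(\<Prod>i<Suc k. g i) * (\<Prod>i<Suc k. g i) = (\<Prod>i<Suc k. g i * g i)" by (simp add: prod.distrib)
  also have "\<dots> = 1" using tau_sq[OF E] unfolding g_def by simp
  also have "(\<Prod>i<length es. sgn A (es!i)) = sigma A S"
    unfolding sigma_def V(8) using prod_set_nth[OF V(4), of "sgn A"] by simp
  finally show ?thesis using circ by simp
qed

lemma inj_img_int: "inj_on f D \<Longrightarrow> X \<subseteq> D \<Longrightarrow> Y \<subseteq> D \<Longrightarrow> f ` X \<inter> f ` Y = f ` (X \<inter> Y)"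
  by (simp add: inj_on_image_Int)

lemma emb_unb: "emb A B \<phi> \<psi> \<tau> \<Longrightarrow> unbalanced_circuit A C \<Longrightarrow> unbalanced_circuit B (mapS \<phi> \<psi> C)"
  unfolding unbalanced_circuit_def using emb_is_circuit by fastforce

lemma emb_bal: "emb A B \<phi> \<psi> \<tau> \<Longrightarrow> balanced_circuit A C \<Longrightarrow> balanced_circuit B (mapS \<phi> \<psi> C)"
  unfolding balanced_circuit_def using emb_is_circuit by fastforce

lemma unb_sub: "unbalanced_circuit A C \<Longrightarrow> fst C \<subseteq> verts A \<and> snd C \<subseteq> edges A"
  unfolding unbalanced_circuit_def using circuit_sub by blast

lemma emb_barbell:
  assumes E: "emb A B \<phi> \<psi> \<tau>" and Bb: "is_barbell A S"
  shows "is_barbell B (mapS \<phi> \<psi> S)"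
proof -
  obtain C1 C2 P where U: "unbalanced_circuit A C1" "unbalanced_circuit A C2" "snd C1 \<inter> snd C2 = {}"
    and Pc: "(\<exists>v. P = ({v}, {}) \<and> fst C1 \<inter> fst C2 = {v}) \<or>
       (fst C1 \<inter> fst C2 = {} \<and>
        (\<exists>a b. a \<in> fst C1 \<and> b \<in> fst C2 \<and> is_path A a b P \<and>
               fst P \<inter> (fst C1 \<union> fst C2) = {a, b}))"
    and S: "S = (fst C1 \<union> fst C2 \<union> fst P, snd C1 \<union> snd C2 \<union> snd P)"
    using Bb unfolding is_barbell_def by blast
  have iv: "inj_on \<phi> (verts A)" and ie: "inj_on \<psi> (edges A)" using E unfolding emb_def by auto
  note s1 = unb_sub[OF U(1)] and s2 = unb_sub[OF U(2)]
  have e1: "snd (mapS \<phi> \<psi> C1) \<inter> snd (mapS \<phi> \<psi> C2) = {}"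
    using inj_img_int[OF ie, of "snd C1" "snd C2"] s1 s2 U(3) by (simp add: mapS_def)
  have vi: "fst (mapS \<phi> \<psi> C1) \<inter> fst (mapS \<phi> \<psi> C2) = \<phi> ` (fst C1 \<inter> fst C2)"
    using inj_img_int[OF iv, of "fst C1" "fst C2"] s1 s2 by (simp add: mapS_def)
  have SS: "mapS \<phi> \<psi> S = (fst (mapS \<phi> \<psi> C1) \<union> fst (mapS \<phi> \<psi> C2) \<union> fst (mapS \<phi> \<psi> P),
      snd (mapS \<phi> \<psi> C1) \<union> snd (mapS \<phi> \<psi> C2) \<union> snd (mapS \<phi> \<psi> P))"
    using S by (simp add: mapS_def image_Un)
  from Pc show ?thesis
  proof
    assume "\<exists>v. P = ({v}, {}) \<and> fst C1 \<inter> fst C2 = {v}"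
    then obtain v where "P = ({v}, {})" "fst C1 \<inter> fst C2 = {v}" by blast
    then have "mapS \<phi> \<psi> P = ({\<phi> v}, {})" "fst (mapS \<phi> \<psi> C1) \<inter> fst (mapS \<phi> \<psi> C2) = {\<phi> v}"
      using vi by (auto simp: mapS_def)
    then show ?thesis unfolding is_barbell_def using emb_unb[OF E U(1)] emb_unb[OF E U(2)] e1 SS
      by blast
  next
    assume "fst C1 \<inter> fst C2 = {} \<and>
        (\<exists>a b. a \<in> fst C1 \<and> b \<in> fst C2 \<and> is_path A a b P \<and>
               fst P \<inter> (fst C1 \<union> fst C2) = {a, b})"
    then obtain a b where ab: "fst C1 \<inter> fst C2 = {}" "a \<in> fst C1" "b \<in> fst C2" "is_path A a b P"
      "fst P \<inter> (fst C1 \<union> fst C2) = {a, b}" by blast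
    have sp: "fst P \<subseteq> verts A" using is_path_sub[OF ab(4)] by blast
    have "fst (mapS \<phi> \<psi> P) \<inter> (fst (mapS \<phi> \<psi> C1) \<union> fst (mapS \<phi> \<psi> C2)) = \<phi> ` (fst P \<inter> (fst C1 \<union> fst C2))"
      using inj_img_int[OF iv, of "fst P" "fst C1 \<union> fst C2"] sp s1 s2 by (simp add: mapS_def image_Un)
    then have "fst (mapS \<phi> \<psi> P) \<inter> (fst (mapS \<phi> \<psi> C1) \<union> fst (mapS \<phi> \<psi> C2)) = {\<phi> a, \<phi> b}"
      using ab(5) by simp
    moreover have "\<phi> a \<in> fst (mapS \<phi> \<psi> C1)" "\<phi> b \<in> fst (mapS \<phi> \<psi> C2)" using ab by (auto simp: mapS_def)
    moreover have "fst (mapS \<phi> \<psi> C1) \<inter> fst (mapS \<phi> \<psi> C2) = {}" using vi ab(1) by simp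
    ultimately show ?thesis unfolding is_barbell_def using emb_unb[OF E U(1)] emb_unb[OF E U(2)] e1 SS
        emb_is_path[OF E ab(4)] by blast
  qed
qed

lemma emb_signed_circuit: "emb A B \<phi> \<psi> \<tau> \<Longrightarrow> signed_circuit A S \<Longrightarrow> signed_circuit B (mapS \<phi> \<psi> S)"
  unfolding signed_circuit_def using emb_bal emb_barbell by blast

lemma emb_tadpole_pc:
  assumes E: "emb A B \<phi> \<psi> \<tau>" and T: "tadpole_pc A x P C"
  shows "tadpole_pc B (\<phi> x) (mapS \<phi> \<psi> P) (mapS \<phi> \<psi> C)"
proof -
  obtain w where W: "is_path A x w P" "unbalanced_circuit A C" "fst P \<inter> fst C = {w}"
    using T unfolding tadpole_pc_def by blast
  have iv: "inj_on \<phi> (verts A)" using E unfolding emb_def by auto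
  have "fst (mapS \<phi> \<psi> P) \<inter> fst (mapS \<phi> \<psi> C) = {\<phi> w}"
    using inj_img_int[OF iv, of "fst P" "fst C"] is_path_sub[OF W(1)] unb_sub[OF W(2)] W(3)
    by (simp add: mapS_def)
  then show ?thesis unfolding tadpole_pc_def using emb_is_path[OF E W(1)] emb_unb[OF E W(2)] by blast
qed

lemma mapS_Un: "mapS \<phi> \<psi> (fst P \<union> fst C, snd P \<union> snd C) = (fst (mapS \<phi> \<psi> P) \<union> fst (mapS \<phi> \<psi> C), snd (mapS \<phi> \<psi> P) \<union> snd (mapS \<phi> \<psi> C))"
  by (simp add: mapS_def image_Un)

lemma emb_tadpole: assumes E: "emb A B \<phi> \<psi> \<tau>" and T: "is_tadpole A x T"
  shows "is_tadpole B (\<phi> x) (mapS \<phi> \<psi> T)"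
proof -
  obtain P C where "tadpole_pc A x P C" "T = (fst P \<union> fst C, snd P \<union> snd C)"
    using T unfolding is_tadpole_def by blast
  then show ?thesis unfolding is_tadpole_def using emb_tadpole_pc[OF E] mapS_Un by metis
qed

lemma emb_tpc: assumes E: "emb A B \<phi> \<psi> \<tau>" and T: "tadpole_path_contains A x T e"
  shows "tadpole_path_contains B (\<phi> x) (mapS \<phi> \<psi> T) (\<psi> e)"
proof -
  obtain P C where "tadpole_pc A x P C" "T = (fst P \<union> fst C, snd P \<union> snd C)" "e \<in> snd P"
    using T unfolding tadpole_path_contains_def by blast
  moreover have "\<psi> e \<in> snd (mapS \<phi> \<psi> P)" using \<open>e \<in> snd P\<close> by (simp add: mapS_def)
  ultimately show ?thesis unfolding tadpole_path_contains_def using emb_tadpole_pc[OF E] mapS_Un by metis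
qed

lemma tadpole_sub: assumes "is_tadpole A x T" shows "fst T \<subseteq> verts A \<and> snd T \<subseteq> edges A"
proof -
  obtain P C w where "is_path A x w P" "unbalanced_circuit A C" "T = (fst P \<union> fst C, snd P \<union> snd C)"
    using assms unfolding is_tadpole_def tadpole_pc_def by blast
  then show ?thesis using is_path_sub[of A x w P] unb_sub[of A C] by auto
qed

lemma barbell_sub: assumes "is_barbell A T" shows "fst T \<subseteq> verts A \<and> snd T \<subseteq> edges A"
proof -
  obtain C1 C2 P where U: "unbalanced_circuit A C1" "unbalanced_circuit A C2"
    and Pc: "(\<exists>v. P = ({v}, {}) \<and> fst C1 \<inter> fst C2 = {v}) \<or>
       (fst C1 \<inter> fst C2 = {} \<and>
        (\<exists>a b. a \<in> fst C1 \<and> b \<in> fst C2 \<and> is_path A a b P \<and>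
               fst P \<inter> (fst C1 \<union> fst C2) = {a, b}))"
    and S: "T = (fst C1 \<union> fst C2 \<union> fst P, snd C1 \<union> snd C2 \<union> snd P)"
    using assms unfolding is_barbell_def by blast
  have "fst P \<subseteq> verts A \<and> snd P \<subseteq> edges A"
    using Pc
  proof
    assume "\<exists>v. P = ({v}, {}) \<and> fst C1 \<inter> fst C2 = {v}"
    then show ?thesis using unb_sub[OF U(1)] by auto
  next
    assume "fst C1 \<inter> fst C2 = {} \<and>
        (\<exists>a b. a \<in> fst C1 \<and> b \<in> fst C2 \<and> is_path A a b P \<and>
               fst P \<inter> (fst C1 \<union> fst C2) = {a, b})"
    then obtain a b where "is_path A a b P" by blast
    then show ?thesis using is_path_sub[of A a b P] by simp
  qed
  then show ?thesis using S unb_sub[OF U(1)] unb_sub[OF U(2)] by auto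
qed

lemma sc_sub: "signed_circuit A T \<Longrightarrow> fst T \<subseteq> verts A \<and> snd T \<subseteq> edges A"
  unfolding signed_circuit_def balanced_circuit_def using barbell_sub[of A T] circuit_sub[of A T] by auto

lemma emb_cover6:
  assumes E: "emb A B \<phi> \<psi> \<tau>" and bij: "bij_betw \<psi> (edges A) (edges B)"
    and sub: "\<forall>S\<in>set Ss. snd S \<subseteq> edges A" and C: "cover6 A Ss"
  shows "cover6 B (map (mapS \<phi> \<psi>) Ss)"
  unfolding cover6_def
proof
  fix f assume "f \<in> edges B"
  then obtain g where g: "g \<in> edges A" "f = \<psi> g" using bij by (auto simp: bij_betw_def)
  have ie: "inj_on \<psi> (edges A)" using bij by (simp add: bij_betw_def)
  have "filter (\<lambda>S. f \<in> snd S) (map (mapS \<phi> \<psi>) Ss) = map (mapS \<phi> \<psi>) (filter (\<lambda>S. f \<in> snd (mapS \<phi> \<psi> S)) Ss)"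
    by (simp add: filter_map comp_def)
  also have "filter (\<lambda>S. f \<in> snd (mapS \<phi> \<psi> S)) Ss = filter (\<lambda>S. g \<in> snd S) Ss"
  proof (rule filter_cong)
    fix S assume "S \<in> set Ss"
    then have "snd S \<subseteq> edges A" using sub by blast
    then show "(f \<in> snd (mapS \<phi> \<psi> S)) = (g \<in> snd S)" using g ie
      by (auto simp: mapS_def inj_on_def)
  qed simp
  finally show "length (filter (\<lambda>S. f \<in> snd S) (map (mapS \<phi> \<psi>) Ss)) = 6"
    using C g unfolding cover6_def by simp
qed

lemma cover6_swap: "cover6 G (p @ n @ r) \<longleftrightarrow> cover6 G (n @ p @ r)"
  unfolding cover6_def by (simp add: add.left_commute)

lemma psi_sub:
  assumes P: "psi_cover A a b t pp np tx ty sc"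
  shows "\<forall>S\<in>set (pp @ np @ tx @ ty @ sc). snd S \<subseteq> edges A"
proof
  fix S assume S: "S \<in> set (pp @ np @ tx @ ty @ sc)"
  have F: "\<forall>P\<in>set pp. is_path A a b P" "\<forall>P\<in>set np. is_path A a b P" "\<forall>T\<in>set tx. is_tadpole A a T"
    "\<forall>T\<in>set ty. is_tadpole A b T" "\<forall>S\<in>set sc. signed_circuit A S"
    using P unfolding psi_cover_def by simp_all
  consider "S \<in> set pp" | "S \<in> set np" | "S \<in> set tx" | "S \<in> set ty" | "S \<in> set sc" using S by auto
  then show "snd S \<subseteq> edges A"
  proof cases
    case 1 then show ?thesis using F(1) is_path_sub[of A a b S] by simp
  next
    case 2 then show ?thesis using F(2) is_path_sub[of A a b S] by simp
  next
    case 3 then show ?thesis using F(3) tadpole_sub[of A a S] by simp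
  next
    case 4 then show ?thesis using F(4) tadpole_sub[of A b S] by simp
  next
    case 5 then show ?thesis using F(5) sc_sub[of A S] by simp
  qed
qed

lemma emb_psi_star:
  assumes E: "emb A B \<phi> \<psi> \<tau>" and bij: "bij_betw \<psi> (edges A) (edges B)"
    and a: "a \<in> verts A" and b: "b \<in> verts A"
    and H: "has_psi_star2 A a b f"
  shows "has_psi_star2 B (\<phi> a) (\<phi> b) (\<psi> f)"
proof -
  obtain pp np tx ty sc where P: "psi_cover A a b 2 pp np tx ty sc" and S1: "star_cond A a b f tx"
    and S2: "star_cond A b a f ty" using H unfolding has_psi_star2_def by blast
  have F: "\<forall>P\<in>set pp. is_path A a b P \<and> sigma A P = 1" "\<forall>P\<in>set np. is_path A a b P \<and> sigma A P = -1"
    "\<forall>T\<in>set tx. is_tadpole A a T"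
    "\<forall>T\<in>set ty. is_tadpole A b T" "\<forall>S\<in>set sc. signed_circuit A S"
    "length pp = 2" "length np = 2" "length tx = 2" "length ty = 2" "cover6 A (pp @ np @ tx @ ty @ sc)"
    using P unfolding psi_cover_def by simp_all
  let ?m = "map (mapS \<phi> \<psi>)"
  have iv: "inj_on \<phi> (verts A)" using E unfolding emb_def by simp
  have cov: "cover6 B (?m pp @ ?m np @ ?m tx @ ?m ty @ ?m sc)"
    using emb_cover6[OF E bij psi_sub[OF P] F(10)] by simp
  have cov2: "cover6 B (?m np @ ?m pp @ ?m tx @ ?m ty @ ?m sc)"
    using cov cover6_swap by blast
  have pth: "\<And>Q. is_path A a b Q \<Longrightarrow> is_path B (\<phi> a) (\<phi> b) (mapS \<phi> \<psi> Q) \<and> sigma B (mapS \<phi> \<psi> Q) = sigma A Q * (\<tau> a * \<tau> b)"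
    using emb_is_path[OF E] by (simp add: mult.assoc)
  have tx: "\<forall>T\<in>set (?m tx). is_tadpole B (\<phi> a) T"
  proof
    fix T assume "T \<in> set (?m tx)"
    then obtain T0 where "T0 \<in> set tx" "T = mapS \<phi> \<psi> T0" by auto
    then show "is_tadpole B (\<phi> a) T" using F(3) emb_tadpole[OF E, of a T0] by simp
  qed
  have ty: "\<forall>T\<in>set (?m ty). is_tadpole B (\<phi> b) T"
  proof
    fix T assume "T \<in> set (?m ty)"
    then obtain T0 where "T0 \<in> set ty" "T = mapS \<phi> \<psi> T0" by auto
    then show "is_tadpole B (\<phi> b) T" using F(4) emb_tadpole[OF E, of b T0] by simp
  qed
  have scc: "\<forall>S\<in>set (?m sc). signed_circuit B S"
  proof
    fix T assume "T \<in> set (?m sc)"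
    then obtain T0 where "T0 \<in> set sc" "T = mapS \<phi> \<psi> T0" by auto
    then show "signed_circuit B T" using F(5) emb_signed_circuit[OF E, of T0] by simp
  qed
  have lens: "length (?m pp) = 2" "length (?m np) = 2" "length (?m tx) = 2" "length (?m ty) = 2"
    using F by simp_all
  have tt: "\<tau> a * \<tau> b = 1 \<or> \<tau> a * \<tau> b = -1"
  proof -
    have "\<tau> a = 1 \<or> \<tau> a = -1" "\<tau> b = 1 \<or> \<tau> b = -1" using E unfolding emb_def by simp_all
    then show ?thesis by auto
  qed
  have mp: "\<And>s L. \<forall>Q\<in>set L. is_path A a b Q \<and> sigma A Q = s \<Longrightarrow>
     \<forall>Q\<in>set (?m L). is_path B (\<phi> a) (\<phi> b) Q \<and> sigma B Q = s * (\<tau> a * \<tau> b)"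
  proof -
    fix s L assume L: "\<forall>Q\<in>set L. is_path A a b Q \<and> sigma A Q = s"
    show "\<forall>Q\<in>set (?m L). is_path B (\<phi> a) (\<phi> b) Q \<and> sigma B Q = s * (\<tau> a * \<tau> b)"
    proof
      fix T assume "T \<in> set (?m L)"
      then obtain T0 where "T0 \<in> set L" "T = mapS \<phi> \<psi> T0" by auto
      then show "is_path B (\<phi> a) (\<phi> b) T \<and> sigma B T = s * (\<tau> a * \<tau> b)" using L pth[of T0] by simp
    qed
  qed
  have pc: "psi_cover B (\<phi> a) (\<phi> b) 2 (?m pp) (?m np) (?m tx) (?m ty) (?m sc) \<or>
            psi_cover B (\<phi> a) (\<phi> b) 2 (?m np) (?m pp) (?m tx) (?m ty) (?m sc)"
    using tt
  proof
    assume T: "\<tau> a * \<tau> b = 1"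
    have "\<forall>Q\<in>set (?m pp). is_path B (\<phi> a) (\<phi> b) Q \<and> sigma B Q = 1" using mp[OF F(1)] T by simp
    moreover have "\<forall>Q\<in>set (?m np). is_path B (\<phi> a) (\<phi> b) Q \<and> sigma B Q = -1" using mp[OF F(2)] T by simp
    ultimately have "psi_cover B (\<phi> a) (\<phi> b) 2 (?m pp) (?m np) (?m tx) (?m ty) (?m sc)"
      unfolding psi_cover_def using lens tx ty scc cov by simp
    then show ?thesis by blast
  next
    assume T: "\<tau> a * \<tau> b = -1"
    have "\<forall>Q\<in>set (?m pp). is_path B (\<phi> a) (\<phi> b) Q \<and> sigma B Q = -1" using mp[OF F(1)] T by simp
    moreover have "\<forall>Q\<in>set (?m np). is_path B (\<phi> a) (\<phi> b) Q \<and> sigma B Q = 1" using mp[OF F(2)] T by simp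
    ultimately have "psi_cover B (\<phi> a) (\<phi> b) 2 (?m np) (?m pp) (?m tx) (?m ty) (?m sc)"
      unfolding psi_cover_def using lens tx ty scc cov2 by simp
    then show ?thesis by blast
  qed
  have star: "\<And>u u' ts. u' \<in> verts A \<Longrightarrow> (\<forall>T\<in>set ts. is_tadpole A u T) \<Longrightarrow> star_cond A u u' f ts \<Longrightarrow> star_cond B (\<phi> u) (\<phi> u') (\<psi> f) (?m ts)"
  proof -
    fix u u' ts assume u': "u' \<in> verts A" and T: "\<forall>T\<in>set ts. is_tadpole A u T" and sc: "star_cond A u u' f ts"
    have nm: "\<And>T. T \<in> set ts \<Longrightarrow> u' \<notin> fst T \<Longrightarrow> \<phi> u' \<notin> fst (mapS \<phi> \<psi> T)"
    proof -
      fix T assume T1: "T \<in> set ts" "u' \<notin> fst T"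
      then have "fst T \<subseteq> verts A" using T tadpole_sub[of A u T] by simp
      then show "\<phi> u' \<notin> fst (mapS \<phi> \<psi> T)" using T1(2) iv u'
        by (auto simp: mapS_def inj_on_def)
    qed
    obtain T1 T2 where ts: "ts = [T1, T2]" and D: "(u' \<notin> fst T1 \<and> tadpole_path_contains A u T2 f) \<or>
      (u' \<notin> fst T2 \<and> tadpole_path_contains A u T1 f)" using sc unfolding star_cond_def by blast
    have "(\<phi> u' \<notin> fst (mapS \<phi> \<psi> T1) \<and> tadpole_path_contains B (\<phi> u) (mapS \<phi> \<psi> T2) (\<psi> f)) \<or>
          (\<phi> u' \<notin> fst (mapS \<phi> \<psi> T2) \<and> tadpole_path_contains B (\<phi> u) (mapS \<phi> \<psi> T1) (\<psi> f))"
      using D nm[of T1] nm[of T2] emb_tpc[OF E, of u T1 f] emb_tpc[OF E, of u T2 f] ts by auto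
    then show "star_cond B (\<phi> u) (\<phi> u') (\<psi> f) (?m ts)"
      unfolding star_cond_def ts by simp
  qed
  have "star_cond B (\<phi> a) (\<phi> b) (\<psi> f) (?m tx)" using star[OF b F(3) S1] .
  moreover have "star_cond B (\<phi> b) (\<phi> a) (\<psi> f) (?m ty)" using star[OF a F(4) S2] .
  ultimately show ?thesis using pc unfolding has_psi_star2_def by blast
qed



lemma len2: "length xs = 2 \<Longrightarrow> \<exists>a b. xs = [a, b]"
  by (cases xs; cases "tl xs") (auto simp: numeral_2_eq_2)

lemma cover6_swap2: "cover6 G (p @ [T1, T2] @ r) \<longleftrightarrow> cover6 G (p @ [T2, T1] @ r)"
proof -
  have "\<And>P. length (filter P (p @ [T1, T2] @ r)) = length (filter P (p @ [T2, T1] @ r))" by simp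
  then show ?thesis unfolding cover6_def by presburger
qed

lemma path_first:
  assumes P: "path_seq G vs es" and h: "hd vs = u" and g: "g \<in> set es" and ge: "ends G g = {u, v}" and uv: "u \<noteq> v"
  shows "\<exists>vs' es'. vs = u # vs' \<and> es = g # es' \<and> hd vs' = v"
proof -
  obtain i where i: "i < length es" "es!i = g" by (metis g in_set_conv_nth)
  have L: "length vs = Suc (length es)" and d: "distinct vs" using P by (auto simp: path_seq_def)
  have en: "ends G g = {vs!i, vs!Suc i}" using P i by (auto simp: path_seq_def)
  have u0: "vs!0 = u" using h L by (cases vs) auto
  have i0: "i = 0"
  proof (rule ccontr)
    assume "i \<noteq> 0"
    then have "vs!i \<noteq> vs!0" "vs!Suc i \<noteq> vs!0" using d L i by (auto simp: nth_eq_iff_index_eq)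
    then show False using en ge u0 by (auto simp: doubleton_eq_iff)
  qed
  have v1: "vs!1 = v"
  proof -
    have "vs!1 \<noteq> vs!0" using d L i i0 by (auto simp: nth_eq_iff_index_eq)
    then show ?thesis using en ge u0 i0 uv by (auto simp: doubleton_eq_iff)
  qed
  obtain a vs' where vs: "vs = a # vs'" using L by (cases vs) auto
  obtain b es' where es: "es = b # es'" using i by (cases es) auto
  show ?thesis using vs es u0 v1 i i0 L by (cases vs') auto
qed

locale ext =
  fixes H :: "('v,'e) sgraph" and G :: "('v,'e) sgraph" and x y z :: 'v and e f1 f2 :: 'e and s1 s2 :: int
  assumes wf: "wf_sgraph H"
    and xV: "x \<in> verts H" and yV: "y \<in> verts H" and xy: "x \<noteq> y"
    and eE: "e \<in> edges H" and ee: "ends H e = {x, y}"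
    and zV: "z \<notin> verts H"
    and f1E: "f1 \<notin> edges H" and f2E: "f2 \<notin> edges H" and f12: "f1 \<noteq> f2"
    and s1: "s1 \<in> {1, -1}" and s2: "s2 \<in> {1, -1}"
    and Gdef: "G = \<lparr>verts = insert z (verts H), edges = insert f1 (insert f2 (edges H)),
              ends = (ends H)(f1 := {y, z}, f2 := {x, z}),
              sgn = (sgn H)(f1 := s1, f2 := s2)\<rparr>"
    and tri: "sgn H e * s1 * s2 = -1"
begin

lemma G_verts: "verts G = insert z (verts H)" using Gdef by simp
lemma G_edges: "edges G = insert f1 (insert f2 (edges H))" using Gdef by simp
lemma G_f1: "ends G f1 = {y, z}" "sgn G f1 = s1" using Gdef f12 by auto
lemma G_f2: "ends G f2 = {x, z}" "sgn G f2 = s2" using Gdef f12 by auto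
lemma G_H: "f \<in> edges H \<Longrightarrow> ends G f = ends H f \<and> sgn G f = sgn H f"
  using Gdef f1E f2E by auto

lemma sgne: "sgn H e = 1 \<or> sgn H e = -1" using wf eE unfolding wf_sgraph_def by auto
lemma s2sq: "s2 * s2 = 1" using s2 by auto
lemma es1: "sgn H e * s1 = - s2"
proof -
  have "sgn H e * s1 * s2 * s2 = - s2" using tri by simp
  then show ?thesis using s2sq by (simp add: mult.assoc)
qed
lemma s1s2: "s1 * s2 = - sgn H e"
  using tri sgne by (auto simp: mult.assoc)

lemma xz: "x \<noteq> z" and yz: "y \<noteq> z" using xV yV zV by auto

lemma lift: "emb H G id id (\<lambda>_. 1)"
  unfolding emb_def using G_H by (auto simp: G_verts G_edges)

lemma mapS_id: "mapS id id S = S" by (simp add: mapS_def)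

lemma lift_path_seq: "path_seq H vs es \<Longrightarrow> path_seq G vs es"
  using emb_path_seq[OF lift] by simp

lemma lift_path: "is_path H a b P \<Longrightarrow> is_path G a b P \<and> sigma G P = sigma H P"
  using emb_is_path[OF lift, of a b P] by (simp add: mapS_id)

lemma lift_circ: "is_circuit H C \<Longrightarrow> is_circuit G C \<and> sigma G C = sigma H C"
  using emb_is_circuit[OF lift, of C] by (simp add: mapS_id)

lemma lift_sc: "signed_circuit H S \<Longrightarrow> signed_circuit G S"
  using emb_signed_circuit[OF lift, of S] by (simp add: mapS_id)

lemma lift_tp: "is_tadpole H u T \<Longrightarrow> is_tadpole G u T"
  using emb_tadpole[OF lift, of u T] by (simp add: mapS_id)

lemma lift_tpc: "tadpole_pc H u P C \<Longrightarrow> tadpole_pc G u P C"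
  using emb_tadpole_pc[OF lift, of u P C] by (simp add: mapS_id)

lemma lift_unb: "unbalanced_circuit H C \<Longrightarrow> unbalanced_circuit G C"
  using emb_unb[OF lift, of C] by (simp add: mapS_id)

lemma xG: "x \<in> verts G" and yG: "y \<in> verts G" and zG: "z \<in> verts G"
  and f1G: "f1 \<in> edges G" and f2G: "f2 \<in> edges G" and eG: "e \<in> edges G"
  using xV yV eE by (auto simp: G_verts G_edges)

lemma eG_ends: "ends G e = {x, y}" and eG_sgn: "sgn G e = sgn H e"
  using G_H[OF eE] ee by auto

lemma ef: "e \<noteq> f1" "e \<noteq> f2" using eE f1E f2E by auto

lemma ext_path:
  assumes P: "is_path H x y P" and s: "sigma H P = sgn H e"
  shows "is_path G x z (insert z (fst P), insert f1 (snd P)) \<and> sigma G (insert z (fst P), insert f1 (snd P)) = - s2"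
proof -
  obtain vs es where V: "path_seq H vs es" "hd vs = x" "last vs = y" "P = (set vs, set es)"
    using P unfolding is_path_def by blast
  have Gp: "path_seq G vs es" using lift_path_seq[OF V(1)] .
  have sub: "set vs \<subseteq> verts H" "set es \<subseteq> edges H" using V(1) by (auto simp: path_seq_def)
  have ne: "vs \<noteq> []" using V(1) by (auto simp: path_seq_def)
  have "path_seq G (vs @ [z]) (es @ [f1])"
    using path_seq_snoc[OF Gp] sub zV f1E zG f1G G_f1 V(3) by auto
  then have "is_path G x z (set (vs @ [z]), set (es @ [f1]))"
    using is_pathI ne V(2) by fastforce
  moreover have "sigma G (insert z (set vs), insert f1 (set es)) = s1 * sigma G (set vs, set es)"
    using sigma_insert[of "set es" f1 G] sub f1E G_f1 by auto
  moreover have "sigma G (set vs, set es) = sgn H e" using lift_path[OF P] s V(4) by simp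
  ultimately show ?thesis using V(4) es1 by (simp add: mult.commute)
qed

lemma f2path: "is_path G x z ({x, z}, {f2}) \<and> sigma G ({x, z}, {f2}) = s2"
proof -
  have "path_seq G [x, z] [f2]" using path_seq_Cons_Nil[of G x z f2] xz xG zG f2G G_f2 by simp
  then have "is_path G x z (set [x, z], set [f2])" by (rule is_pathI) auto
  then show ?thesis using G_f2 by (simp add: sigma_def)
qed

lemma hd_last_distinct: "distinct xs \<Longrightarrow> length xs \<ge> 2 \<Longrightarrow> hd xs \<noteq> last xs"
  by (cases xs) auto

lemma bad_noe:
  assumes P: "is_path H x y P" and s: "sigma H P = - sgn H e"
  shows "e \<notin> snd P"
proof
  assume eP: "e \<in> snd P"
  obtain vs es where V: "path_seq H vs es" "hd vs = x" "last vs = y" "P = (set vs, set es)"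
    using P unfolding is_path_def by blast
  obtain vs' es' where W: "vs = x # vs'" "es = e # es'" "hd vs' = y"
    using path_first[OF V(1) V(2), of e y] eP V(4) ee xy by auto
  have P': "path_seq H vs' es'" using V(1) W by (simp add: path_seq_Cons)
  have ne: "vs' \<noteq> []" using P' by (auto simp: path_seq_def)
  have "es' = []"
  proof (rule ccontr)
    assume "es' \<noteq> []"
    then have "length vs' \<ge> 2" using P' by (cases es') (auto simp: path_seq_def)
    moreover have "distinct vs'" using P' by (simp add: path_seq_def)
    ultimately have "hd vs' \<noteq> last vs'" using hd_last_distinct by blast
    moreover have "last vs' = y" using V(3) W(1) ne by simp
    ultimately show False using W(3) by simp
  qed
  then have "sigma H P = sgn H e" using V(4) W(2) by (simp add: sigma_def)
  then show False using s sgne by auto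
qed

lemma Xa_lem:
  assumes P: "is_path H x y P" and s: "sigma H P = - sgn H e"
  shows "is_tadpole G x (fst P, insert e (snd P))"
proof -
  obtain vs es where V: "path_seq H vs es" "hd vs = x" "last vs = y" "P = (set vs, set es)"
    using P unfolding is_path_def by blast
  have Gp: "path_seq G vs es" using lift_path_seq[OF V(1)] .
  have ne: "vs \<noteq> []" using V(1) by (auto simp: path_seq_def)
  have sub: "set es \<subseteq> edges H" using V(1) by (auto simp: path_seq_def)
  have en: "e \<notin> set es" using bad_noe[OF P s] V(4) by simp
  have C: "is_circuit G (set vs, set (es @ [e]))"
    using close_circuit[OF Gp eG en] V eG_ends by (simp add: insert_commute)
  have "sigma G (set vs, set (es @ [e])) = sgn G e * sigma G (set vs, set es)"
    using sigma_insert[of "set es" e G] en by simp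
  also have "\<dots> = -1" using eG_sgn lift_path[OF P] s V(4) sgne by auto
  finally have U: "unbalanced_circuit G (set vs, set (es @ [e]))" using C unfolding unbalanced_circuit_def by simp
  have "path_seq G [x] []" using xG by (simp add: path_seq_Nil)
  then have P0: "is_path G x x ({x}, {})" using is_pathI[of G "[x]" "[]"] by simp
  have xin: "x \<in> set vs" using V(2) ne by auto
  have "tadpole_pc G x ({x}, {}) (set vs, set (es @ [e]))"
    unfolding tadpole_pc_def using P0 U xin by auto
  moreover have "(fst P, insert e (snd P)) = (fst ({x}, {}) \<union> fst (set vs, set (es @ [e])), snd ({x}, {}) \<union> snd (set vs, set (es @ [e])))"
    using V(4) xin by auto
  ultimately show ?thesis unfolding is_tadpole_def by blast
qed

lemma B2_lem:
  assumes P: "is_path H x y P" and s: "sigma H P = - sgn H e"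
  shows "balanced_circuit G (insert z (fst P), insert f1 (insert f2 (snd P)))"
proof -
  obtain vs es where V: "path_seq H vs es" "hd vs = x" "last vs = y" "P = (set vs, set es)"
    using P unfolding is_path_def by blast
  have Gp: "path_seq G vs es" using lift_path_seq[OF V(1)] .
  have sub: "set vs \<subseteq> verts H" "set es \<subseteq> edges H" using V(1) by (auto simp: path_seq_def)
  have ne: "vs \<noteq> []" using V(1) by (auto simp: path_seq_def)
  have Q: "path_seq G (vs @ [z]) (es @ [f1])"
    using path_seq_snoc[OF Gp] sub zV f1E zG f1G G_f1 V(3) by auto
  have n2: "f2 \<notin> set (es @ [f1])" using sub f2E f12 by auto
  have C: "is_circuit G (set (vs @ [z]), set ((es @ [f1]) @ [f2]))"
    using close_circuit[OF Q f2G n2] G_f2 ne V(2) by (simp add: insert_commute)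
  have e1: "f1 \<notin> set es" "f2 \<notin> set es" using sub f1E f2E by auto
  have "sigma G (set (vs @ [z]), set ((es @ [f1]) @ [f2])) = s2 * (s1 * sigma G (set vs, set es))"
    using e1 f12 G_f1 G_f2 by (simp add: sigma_def)
  also have "\<dots> = 1" using lift_path[OF P] s V(4) s1s2 sgne by (auto simp: algebra_simps)
  finally show ?thesis using C V(4) unfolding balanced_circuit_def by (simp add: insert_commute)
qed

lemma prefix_tp:
  assumes T: "tadpole_pc H u P C" and f: "f = f1 \<or> f = f2" and fe: "ends G f = {z, u}"
  shows "tadpole_pc G z (insert z (fst P), insert f (snd P)) C"
proof -
  obtain w where W: "is_path H u w P" "unbalanced_circuit H C" "fst P \<inter> fst C = {w}"
    using T unfolding tadpole_pc_def by blast
  obtain vs es where V: "path_seq H vs es" "hd vs = u" "last vs = w" "P = (set vs, set es)"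
    using W(1) unfolding is_path_def by blast
  have Gp: "path_seq G vs es" using lift_path_seq[OF V(1)] .
  have sub: "set vs \<subseteq> verts H" "set es \<subseteq> edges H" using V(1) by (auto simp: path_seq_def)
  have ne: "vs \<noteq> []" using V(1) by (auto simp: path_seq_def)
  have fG: "f \<in> edges G" "f \<notin> edges H" using f f1G f2G f1E f2E by auto
  have "path_seq G (z # vs) (f # es)" using Gp sub zV fG zG fe V(2) by (auto simp: path_seq_Cons)
  then have "is_path G z w (set (z # vs), set (f # es))" using is_pathI ne V(3) by fastforce
  moreover have "fst C \<subseteq> verts H" using unb_sub[OF W(2)] by simp
  then have "insert z (fst P) \<inter> fst C = {w}" using W(3) zV by auto
  ultimately show ?thesis unfolding tadpole_pc_def using V(4) lift_unb[OF W(2)] by auto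
qed

lemma Za_lem:
  assumes T: "is_tadpole H y T"
  shows "is_tadpole G z (insert z (fst T), insert f1 (snd T))"
proof -
  obtain P C where "tadpole_pc H y P C" "T = (fst P \<union> fst C, snd P \<union> snd C)"
    using T unfolding is_tadpole_def by blast
  moreover have "ends G f1 = {z, y}" using G_f1 by (simp add: insert_commute)
  ultimately show ?thesis unfolding is_tadpole_def using prefix_tp[of y P C f1] by fastforce
qed

lemma Zb_lem:
  assumes T: "is_tadpole H x T"
  shows "tadpole_path_contains G z (insert z (fst T), insert f2 (snd T)) f2"
proof -
  obtain P C where "tadpole_pc H x P C" "T = (fst P \<union> fst C, snd P \<union> snd C)"
    using T unfolding is_tadpole_def by blast
  moreover have "ends G f2 = {z, x}" using G_f2 by (simp add: insert_commute)
  ultimately show ?thesis unfolding tadpole_path_contains_def using prefix_tp[of x P C f2] by fastforce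
qed

lemma tpc_tp: "tadpole_path_contains A u T f \<Longrightarrow> is_tadpole A u T"
  unfolding tadpole_path_contains_def is_tadpole_def by blast

lemma tadpole_edge_ends: assumes "is_tadpole A u T" "g \<in> snd T" shows "ends A g \<subseteq> fst T"
proof -
  obtain P C w where W: "is_path A u w P" "unbalanced_circuit A C" "T = (fst P \<union> fst C, snd P \<union> snd C)"
    using assms(1) unfolding is_tadpole_def tadpole_pc_def by blast
  obtain vs es where V: "path_seq A vs es" "P = (set vs, set es)" using W(1) unfolding is_path_def by blast
  show ?thesis
  proof (cases "g \<in> snd P")
    case True then show ?thesis using path_seq_edge_ends[OF V(1), of g] V(2) W(3) by auto
  next
    case False then have "g \<in> snd C" using assms(2) W(3) by auto
    then show ?thesis using circuit_edge_ends[of A C g] W(2,3) unfolding unbalanced_circuit_def by auto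
  qed
qed

lemma Xb_lem:
  assumes T: "tadpole_path_contains H x T e"
  shows "\<exists>T'. tadpole_path_contains G x T' f2 \<and> e \<notin> snd T' \<and> f1 \<in> snd T' \<and> f2 \<in> snd T' \<and>
     (\<forall>g. g \<noteq> e \<longrightarrow> g \<noteq> f1 \<longrightarrow> g \<noteq> f2 \<longrightarrow> (g \<in> snd T' \<longleftrightarrow> g \<in> snd T))"
proof -
  obtain P C where PC: "tadpole_pc H x P C" "T = (fst P \<union> fst C, snd P \<union> snd C)" "e \<in> snd P"
    using T unfolding tadpole_path_contains_def by blast
  obtain w where W: "is_path H x w P" "unbalanced_circuit H C" "fst P \<inter> fst C = {w}"
    using PC(1) unfolding tadpole_pc_def by blast
  obtain vs es where V: "path_seq H vs es" "hd vs = x" "last vs = w" "P = (set vs, set es)"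
    using W(1) unfolding is_path_def by blast
  obtain vs' es' where Q: "vs = x # vs'" "es = e # es'" "hd vs' = y"
    using path_first[OF V(1) V(2), of e y] PC(3) V(4) ee xy by auto
  have P': "path_seq H vs' es'" "x \<notin> set vs'" "e \<notin> set es'" using V(1) Q by (auto simp: path_seq_Cons)
  have ne: "vs' \<noteq> []" using P'(1) by (auto simp: path_seq_def)
  have sub: "set vs' \<subseteq> verts H" "set es' \<subseteq> edges H" using P'(1) by (auto simp: path_seq_def)
  have Gp: "path_seq G vs' es'" using lift_path_seq[OF P'(1)] .
  have p1: "path_seq G (z # vs') (f1 # es')" using Gp sub zV f1E zG f1G G_f1 Q(3)
    by (auto simp: path_seq_Cons insert_commute)
  have p2: "path_seq G (x # z # vs') (f2 # f1 # es')" using p1 sub xz P'(2) f12 f2E xG f2G G_f2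
    by (auto simp: path_seq_Cons)
  have lw: "last (x # z # vs') = w" using V(3) Q(1) ne by simp
  define P2 where "P2 = (set (x # z # vs'), set (f2 # f1 # es'))"
  have ip: "is_path G x w P2" unfolding P2_def using is_pathI[OF p2] lw by simp
  have Csub: "fst C \<subseteq> verts H" "snd C \<subseteq> edges H" using unb_sub[OF W(2)] by auto
  have int: "fst P2 \<inter> fst C = {w}" using W(3) V(4) Q(1) Csub zV unfolding P2_def by auto
  have tpc: "tadpole_pc G x P2 C" unfolding tadpole_pc_def using ip lift_unb[OF W(2)] int by blast
  define T' where "T' = (fst P2 \<union> fst C, snd P2 \<union> snd C)"
  have f2P: "f2 \<in> snd P2" unfolding P2_def by simp
  have c1: "tadpole_path_contains G x T' f2" unfolding tadpole_path_contains_def T'_def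
    using tpc f2P by blast
  have eC: "e \<notin> snd C"
  proof
    assume "e \<in> snd C"
    then have "ends H e \<subseteq> fst C" using circuit_edge_ends[of H C e] W(2) unfolding unbalanced_circuit_def by blast
    then have "x \<in> fst C" using ee by auto
    then have "x = w" using W(3) V(4) Q(1) by auto
    moreover have "last vs' = w" using lw ne by simp
    ultimately show False using P'(2) ne last_in_set by metis
  qed
  have "e \<notin> snd T'" unfolding T'_def P2_def using P'(3) eC ef by auto
  moreover have "f1 \<in> snd T'" "f2 \<in> snd T'" unfolding T'_def P2_def by auto
  moreover have "\<forall>g. g \<noteq> e \<longrightarrow> g \<noteq> f1 \<longrightarrow> g \<noteq> f2 \<longrightarrow> (g \<in> snd T' \<longleftrightarrow> g \<in> snd T)"
    unfolding T'_def P2_def using PC(2) V(4) Q(2) by auto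
  ultimately show ?thesis using c1 by blast
qed

lemma Bar_lem:
  assumes T: "tadpole_path_contains H y T e"
  shows "is_barbell G (insert z (fst T), insert f1 (insert f2 (snd T)))"
proof -
  obtain P C where PC: "tadpole_pc H y P C" "T = (fst P \<union> fst C, snd P \<union> snd C)" "e \<in> snd P"
    using T unfolding tadpole_path_contains_def by blast
  obtain w where W: "is_path H y w P" "unbalanced_circuit H C" "fst P \<inter> fst C = {w}"
    using PC(1) unfolding tadpole_pc_def by blast
  obtain vs es where V: "path_seq H vs es" "hd vs = y" "last vs = w" "P = (set vs, set es)"
    using W(1) unfolding is_path_def by blast
  have eyx: "ends H e = {y, x}" using ee by (simp add: insert_commute)
  obtain vs' es' where Q: "vs = y # vs'" "es = e # es'" "hd vs' = x"
    using path_first[OF V(1) V(2), of e x] PC(3) V(4) eyx xy by auto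
  have P': "path_seq H vs' es'" "y \<notin> set vs'" "e \<notin> set es'" using V(1) Q by (auto simp: path_seq_Cons)
  have ne: "vs' \<noteq> []" using P'(1) by (auto simp: path_seq_def)
  have dv: "distinct vs'" using P'(1) by (simp add: path_seq_def)
  have sub: "set vs' \<subseteq> verts H" "set es' \<subseteq> edges H" using P'(1) by (auto simp: path_seq_def)
  have lw: "last vs' = w" using V(3) Q(1) ne by simp
  have Csub: "fst C \<subseteq> verts H" "snd C \<subseteq> edges H" using unb_sub[OF W(2)] by auto
  have wC: "w \<in> fst C" using W(3) by auto
  have yC: "y \<notin> fst C"
  proof
    assume "y \<in> fst C"
    then have "y = w" using W(3) V(4) Q(1) by auto
    then show False using lw ne P'(2) last_in_set by metis
  qed
  have eC: "e \<notin> snd C"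
  proof
    assume "e \<in> snd C"
    then have "ends H e \<subseteq> fst C" using circuit_edge_ends[of H C e] W(2) unfolding unbalanced_circuit_def by blast
    then show False using ee yC by auto
  qed
  have t1: "path_seq G [y, z] [f1]" using path_seq_Cons_Nil[of G y z f1] yz yG zG f1G G_f1 by simp
  have t2: "path_seq G [x, y, z] [e, f1]" using t1 xy xz xG eG ef eG_ends by (simp add: path_seq_Cons)
  have n2: "f2 \<notin> set [e, f1]" using ef f12 by auto
  have TC: "is_circuit G (set [x, y, z], set ([e, f1] @ [f2]))"
    using close_circuit[OF t2 f2G n2] G_f2 by (simp add: insert_commute)
  have "sigma G (set [x, y, z], set ([e, f1] @ [f2])) = sgn H e * s1 * s2"
    using ef f12 G_f1 G_f2 eG_sgn by (simp add: sigma_def)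
  then have U1: "unbalanced_circuit G ({x, y, z}, {e, f1, f2})" using TC tri unfolding unbalanced_circuit_def
    by (simp add: insert_commute)
  have U2: "unbalanced_circuit G C" using lift_unb[OF W(2)] .
  define C1 :: "'v set \<times> 'e set" where "C1 = ({x, y, z}, {e, f1, f2})"
  have dis: "snd C1 \<inter> snd C = {}" using eC Csub f1E f2E unfolding C1_def by auto
  have U1': "unbalanced_circuit G C1" using U1 unfolding C1_def .
  show ?thesis
  proof (cases "es' = []")
    case True
    then have vs': "vs' = [x]" using P'(1) Q(3) by (cases vs') (auto simp: path_seq_def)
    then have "w = x" using lw by simp
    then have int: "fst C1 \<inter> fst C = {x}" using wC yC Csub zV unfolding C1_def by auto
    define P0 :: "'v set \<times> 'e set" where "P0 = ({x}, {})"
    have eq: "(insert z (fst T), insert f1 (insert f2 (snd T))) =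
       (fst C1 \<union> fst C \<union> fst P0, snd C1 \<union> snd C \<union> snd P0)"
      using PC(2) V(4) Q vs' True unfolding C1_def P0_def by auto
    have "\<exists>v. P0 = ({v}, {}) \<and> fst C1 \<inter> fst C = {v}" using int P0_def by blast
    then show ?thesis unfolding is_barbell_def eq using U1' U2 dis by blast
  next
    case False
    then have "length vs' \<ge> 2" using P'(1) by (cases es') (auto simp: path_seq_def)
    then have "hd vs' \<noteq> last vs'" using dv hd_last_distinct by blast
    then have xw: "x \<noteq> w" using Q(3) lw by simp
    have xC: "x \<notin> fst C"
    proof
      assume "x \<in> fst C"
      moreover have "x \<in> fst P" using V(4) Q ne by (cases vs') auto
      ultimately have "x = w" using W(3) by auto
      then show False using xw by simp
    qed
    have int: "fst C1 \<inter> fst C = {}" using xC yC Csub zV unfolding C1_def by auto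
    have ip: "is_path G x w (set vs', set es')" using is_pathI[OF lift_path_seq[OF P'(1)] Q(3) lw] .
    have zn: "z \<notin> set vs'" using sub zV by auto
    have i2: "set vs' \<inter> fst C = {w}" using W(3) V(4) Q(1) wC lw ne by auto
    have xin: "x \<in> set vs'" using Q(3) ne by auto
    have i3: "set vs' \<inter> {x, y, z} = {x}" using xin P'(2) zn by auto
    have int2: "fst (set vs', set es') \<inter> (fst C1 \<union> fst C) = {x, w}"
      using i2 i3 unfolding C1_def by auto
    have xC1: "x \<in> fst C1" unfolding C1_def by simp
    have eq: "(insert z (fst T), insert f1 (insert f2 (snd T))) =
       (fst C1 \<union> fst C \<union> fst (set vs', set es'), snd C1 \<union> snd C \<union> snd (set vs', set es'))"
      using PC(2) V(4) Q xin unfolding C1_def by auto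
    have "fst C1 \<inter> fst C = {} \<and> (\<exists>a b. a \<in> fst C1 \<and> b \<in> fst C \<and> is_path G a b (set vs', set es') \<and>
               fst (set vs', set es') \<inter> (fst C1 \<union> fst C) = {a, b})"
      using int xC1 wC ip int2 by blast
    then show ?thesis unfolding is_barbell_def eq using U1' U2 dis by blast
  qed
qed

lemma tp_noedge: "is_tadpole H u T \<Longrightarrow> v \<notin> fst T \<Longrightarrow> v \<in> ends H g \<Longrightarrow> g \<notin> snd T"
  using tadpole_edge_ends[of H u T g] by blast

theorem general:
  assumes HS: "has_psi_star2 H x y e"
  shows "has_psi_star2 G x z f2"
proof -
  obtain pp np tx ty sc where P: "psi_cover H x y 2 pp np tx ty sc" and S1: "star_cond H x y e tx"
    and S2: "star_cond H y x e ty" using HS unfolding has_psi_star2_def by blast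
  have F: "\<forall>P\<in>set pp. is_path H x y P \<and> sigma H P = 1" "\<forall>P\<in>set np. is_path H x y P \<and> sigma H P = -1"
    "\<forall>T\<in>set tx. is_tadpole H x T"
    "\<forall>T\<in>set ty. is_tadpole H y T" "\<forall>S\<in>set sc. signed_circuit H S"
    "length pp = 2" "length np = 2" "cover6 H (pp @ np @ tx @ ty @ sc)"
    using P unfolding psi_cover_def by simp_all
  obtain gs bs where GB: "\<forall>P\<in>set gs. is_path H x y P \<and> sigma H P = sgn H e"
    "\<forall>P\<in>set bs. is_path H x y P \<and> sigma H P = - sgn H e" "length gs = 2" "length bs = 2"
    "cover6 H (gs @ bs @ tx @ ty @ sc)"
  proof (cases "sgn H e = 1")
    case True then show ?thesis using that[of pp np] F by simp
  next
    case False then have "sgn H e = -1" using sgne by simp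
    moreover have "cover6 H (np @ pp @ tx @ ty @ sc)" using F(8) cover6_swap by blast
    ultimately show ?thesis using that[of np pp] F by simp
  qed
  obtain G1 G2 where g: "gs = [G1, G2]" using len2[OF GB(3)] by blast
  obtain B1 B2 where b: "bs = [B1, B2]" using len2[OF GB(4)] by blast
  obtain T1 T2 where t: "tx = [T1, T2]" and D1: "(y \<notin> fst T1 \<and> tadpole_path_contains H x T2 e) \<or>
      (y \<notin> fst T2 \<and> tadpole_path_contains H x T1 e)" using S1 unfolding star_cond_def by blast
  obtain U1 U2 where u: "ty = [U1, U2]" and D2: "(x \<notin> fst U1 \<and> tadpole_path_contains H y U2 e) \<or>
      (x \<notin> fst U2 \<and> tadpole_path_contains H y U1 e)" using S2 unfolding star_cond_def by blast
  obtain Ta Tb where TT: "y \<notin> fst Ta" "tadpole_path_contains H x Tb e" "is_tadpole H x Ta"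
    "cover6 H (gs @ bs @ [Ta, Tb] @ ty @ sc)"
  proof -
    have c: "cover6 H ((gs @ bs) @ [T1, T2] @ (ty @ sc))" using GB(5) t by simp
    from D1 show ?thesis
    proof
      assume "y \<notin> fst T1 \<and> tadpole_path_contains H x T2 e"
      then show ?thesis using that[of T1 T2] c F(3) t by simp
    next
      assume "y \<notin> fst T2 \<and> tadpole_path_contains H x T1 e"
      moreover have "cover6 H ((gs @ bs) @ [T2, T1] @ (ty @ sc))" using c cover6_swap2 by blast
      ultimately show ?thesis using that[of T2 T1] F(3) t by simp
    qed
  qed
  obtain Ua Ub where UU: "x \<notin> fst Ua" "tadpole_path_contains H y Ub e" "is_tadpole H y Ua"
    "cover6 H (gs @ bs @ [Ta, Tb] @ [Ua, Ub] @ sc)"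
  proof -
    have c: "cover6 H ((gs @ bs @ [Ta, Tb]) @ [U1, U2] @ sc)" using TT(4) u by simp
    from D2 show ?thesis
    proof
      assume "x \<notin> fst U1 \<and> tadpole_path_contains H y U2 e"
      then show ?thesis using that[of U1 U2] c F(4) u by simp
    next
      assume "x \<notin> fst U2 \<and> tadpole_path_contains H y U1 e"
      moreover have "cover6 H ((gs @ bs @ [Ta, Tb]) @ [U2, U1] @ sc)" using c cover6_swap2 by blast
      ultimately show ?thesis using that[of U2 U1] F(4) u by simp
    qed
  qed
  have HC: "cover6 H ([G1, G2, B1, B2, Ta, Tb, Ua, Ub] @ sc)" using UU(4) g b by simp
  have pG1: "is_path H x y G1" "sigma H G1 = sgn H e" using GB(1) g by auto
  have pG2: "is_path H x y G2" "sigma H G2 = sgn H e" using GB(1) g by auto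
  have pB1: "is_path H x y B1" "sigma H B1 = - sgn H e" using GB(2) b by auto
  have pB2: "is_path H x y B2" "sigma H B2 = - sgn H e" using GB(2) b by auto
  obtain Xb where XB: "tadpole_path_contains G x Xb f2" "e \<notin> snd Xb" "f1 \<in> snd Xb" "f2 \<in> snd Xb"
     "\<forall>g. g \<noteq> e \<longrightarrow> g \<noteq> f1 \<longrightarrow> g \<noteq> f2 \<longrightarrow> (g \<in> snd Xb \<longleftrightarrow> g \<in> snd Tb)"
    using Xb_lem[OF TT(2)] by blast
  define G1' where "G1' = (insert z (fst G1), insert f1 (snd G1))"
  define G2' where "G2' = (insert z (fst G2), insert f1 (snd G2))"
  define FF :: "'v set \<times> 'e set" where "FF = ({x, z}, {f2})"
  define Xa where "Xa = (fst B1, insert e (snd B1))"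
  define Za where "Za = (insert z (fst Ua), insert f1 (snd Ua))"
  define Zb where "Zb = (insert z (fst Ta), insert f2 (snd Ta))"
  define Br where "Br = (insert z (fst Ub), insert f1 (insert f2 (snd Ub)))"
  define B2' where "B2' = (insert z (fst B2), insert f1 (insert f2 (snd B2)))"
  have q1: "is_path G x z G1' \<and> sigma G G1' = - s2" unfolding G1'_def using ext_path[OF pG1] .
  have q2: "is_path G x z G2' \<and> sigma G G2' = - s2" unfolding G2'_def using ext_path[OF pG2] .
  have qf: "is_path G x z FF \<and> sigma G FF = s2" unfolding FF_def using f2path .
  have tXa: "is_tadpole G x Xa" unfolding Xa_def using Xa_lem[OF pB1] .
  have tXb: "is_tadpole G x Xb" using tpc_tp[OF XB(1)] .
  have tZa: "is_tadpole G z Za" unfolding Za_def using Za_lem[OF UU(3)] .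
  have cZb: "tadpole_path_contains G z Zb f2" unfolding Zb_def using Zb_lem[OF TT(3)] .
  have tZb: "is_tadpole G z Zb" using tpc_tp[OF cZb] .
  have sBr: "signed_circuit G Br" unfolding Br_def signed_circuit_def using Bar_lem[OF UU(2)] by blast
  have sB2: "signed_circuit G B2'" unfolding B2'_def signed_circuit_def using B2_lem[OF pB2] by blast
  have ssc: "\<forall>S\<in>set sc. signed_circuit G S" using F(5) lift_sc by blast
  have zXa: "z \<notin> fst Xa" unfolding Xa_def using is_path_sub[OF pB1(1)] zV by auto
  have xZa: "x \<notin> fst Za" unfolding Za_def using UU(1) xz by auto
  have sG1: "snd G1 \<subseteq> edges H" using is_path_sub[OF pG1(1)] by simp
  have sG2: "snd G2 \<subseteq> edges H" using is_path_sub[OF pG2(1)] by simp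
  have sB1: "snd B1 \<subseteq> edges H" using is_path_sub[OF pB1(1)] by simp
  have sB2': "snd B2 \<subseteq> edges H" using is_path_sub[OF pB2(1)] by simp
  have sTa: "snd Ta \<subseteq> edges H" using tadpole_sub[OF TT(3)] by simp
  have sTb: "snd Tb \<subseteq> edges H" using tadpole_sub[OF tpc_tp[OF TT(2)]] by simp
  have sUa: "snd Ua \<subseteq> edges H" using tadpole_sub[OF UU(3)] by simp
  have sUb: "snd Ub \<subseteq> edges H" using tadpole_sub[OF tpc_tp[OF UU(2)]] by simp
  have ssc2: "\<forall>S\<in>set sc. snd S \<subseteq> edges H" using F(5) sc_sub by blast
  have nf: "\<And>f. f \<notin> edges H \<Longrightarrow> f \<notin> snd G1 \<and> f \<notin> snd G2 \<and> f \<notin> snd B1 \<and> f \<notin> snd B2 \<and> f \<notin> snd Ta \<and>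
     f \<notin> snd Tb \<and> f \<notin> snd Ua \<and> f \<notin> snd Ub"
    using sG1 sG2 sB1 sB2' sTa sTb sUa sUb by blast
  have scf: "\<And>f. f \<notin> edges H \<Longrightarrow> filter (\<lambda>S. f \<in> snd S) sc = []"
    using ssc2 by (auto simp: filter_empty_conv)
  define L where "L = [G1', G2', FF, FF, Xa, Xb, Za, Zb, Br, B2'] @ sc"
  have covL: "cover6 G L"
    unfolding cover6_def
  proof
    fix g assume gG: "g \<in> edges G"
    consider "g = f1" | "g = f2" | "g \<in> edges H" using gG G_edges by auto
    then show "length (filter (\<lambda>S. g \<in> snd S) L) = 6"
    proof cases
      case 1
      then show ?thesis unfolding L_def G1'_def G2'_def FF_def Xa_def Za_def Zb_def Br_def B2'_def
        using scf[OF f1E] nf[OF f1E] XB(3) f12 ef by simp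
    next
      case 2
      then show ?thesis unfolding L_def G1'_def G2'_def FF_def Xa_def Za_def Zb_def Br_def B2'_def
        using scf[OF f2E] nf[OF f2E] XB(4) f12 ef by simp
    next
      case 3
      have gf: "g \<noteq> f1" "g \<noteq> f2" using 3 f1E f2E by auto
      have H6: "length (filter (\<lambda>S. g \<in> snd S) ([G1, G2, B1, B2, Ta, Tb, Ua, Ub] @ sc)) = 6"
        using HC 3 unfolding cover6_def by blast
      show ?thesis
      proof (cases "g = e")
        case True
        have m: "e \<notin> snd B1" "e \<notin> snd Ta" "e \<notin> snd Ua" "e \<in> snd Tb" "e \<in> snd Ub"
          using bad_noe[OF pB1] tp_noedge[OF TT(3) TT(1)] tp_noedge[OF UU(3) UU(1)] ee
            TT(2) UU(2) unfolding tadpole_path_contains_def by auto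
        show ?thesis using H6 m XB(2) True ef
          unfolding L_def G1'_def G2'_def FF_def Xa_def Za_def Zb_def Br_def B2'_def by (simp split: if_split_asm)
      next
        case False
        have m: "g \<in> snd Xb \<longleftrightarrow> g \<in> snd Tb" using XB(5) False gf by blast
        show ?thesis using H6 m False gf
          unfolding L_def G1'_def G2'_def FF_def Xa_def Za_def Zb_def Br_def B2'_def by (simp split: if_split_asm)
      qed
    qed
  qed
  have tx': "\<forall>T\<in>set [Xa, Xb]. is_tadpole G x T" using tXa tXb by simp
  have ty': "\<forall>T\<in>set [Za, Zb]. is_tadpole G z T" using tZa tZb by simp
  have sc': "\<forall>S\<in>set ([Br, B2'] @ sc). signed_circuit G S" using sBr sB2 ssc by simp
  have st1: "star_cond G x z f2 [Xa, Xb]" unfolding star_cond_def using zXa XB(1) by blast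
  have st2: "star_cond G z x f2 [Za, Zb]" unfolding star_cond_def using xZa cZb by blast
  have pc: "\<exists>pp' np'. psi_cover G x z 2 pp' np' [Xa, Xb] [Za, Zb] ([Br, B2'] @ sc)"
  proof (cases "s2 = 1")
    case True
    have "cover6 G ([FF, FF] @ [G1', G2'] @ [Xa, Xb] @ [Za, Zb] @ [Br, B2'] @ sc)"
      using covL cover6_swap[of G "[G1', G2']" "[FF, FF]"] unfolding L_def by simp
    then have "psi_cover G x z 2 [FF, FF] [G1', G2'] [Xa, Xb] [Za, Zb] ([Br, B2'] @ sc)"
      unfolding psi_cover_def using q1 q2 qf True tx' ty' sc' by simp
    then show ?thesis by blast
  next
    case False
    then have s2m: "s2 = -1" using s2 by simp
    have "cover6 G ([G1', G2'] @ [FF, FF] @ [Xa, Xb] @ [Za, Zb] @ [Br, B2'] @ sc)"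
      using covL unfolding L_def by simp
    then have "psi_cover G x z 2 [G1', G2'] [FF, FF] [Xa, Xb] [Za, Zb] ([Br, B2'] @ sc)"
      unfolding psi_cover_def using q1 q2 qf s2m tx' ty' sc' by simp
    then show ?thesis by blast
  qed
  then show ?thesis unfolding has_psi_star2_def using st1 st2 by blast
qed

end


lemma switch_simps: "verts (switch_at G v) = verts G" "edges (switch_at G v) = edges G"
  "ends (switch_at G v) = ends G"
  "sgn (switch_at G v) f = (if v \<in> ends G f \<and> card (ends G f) = 2 then - sgn G f else sgn G f)"
  by (simp_all add: switch_at_def)

lemma sw_tau:
  assumes "sw_equiv H H'"
  shows "\<exists>\<tau>. (\<forall>a. \<tau> a = 1 \<or> \<tau> a = -1) \<and> verts H' = verts H \<and> edges H' = edges H \<and> ends H' = ends H \<and>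
     (\<forall>f\<in>edges H. \<forall>a b. ends H f = {a, b} \<longrightarrow> sgn H' f = sgn H f * \<tau> a * \<tau> b)"
  using assms unfolding sw_equiv_def
proof (induction rule: rtranclp_induct)
  case base
  show ?case by (intro exI[of _ "\<lambda>_. 1"]) simp
next
  case (step H1 H2)
  obtain \<tau> where T: "\<forall>a. \<tau> a = 1 \<or> \<tau> a = -1" "verts H1 = verts H" "edges H1 = edges H" "ends H1 = ends H"
    "\<forall>f\<in>edges H. \<forall>a b. ends H f = {a, b} \<longrightarrow> sgn H1 f = sgn H f * \<tau> a * \<tau> b" using step.IH by blast
  obtain v where v: "H2 = switch_at H1 v" using step.hyps(2) by blast
  define \<tau>' where "\<tau>' = \<tau>(v := - \<tau> v)"
  have t1: "\<forall>a. \<tau>' a = 1 \<or> \<tau>' a = -1" using T(1) unfolding \<tau>'_def by (metis fun_upd_apply minus_minus)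
  have sq: "\<And>a. \<tau> a * \<tau> a = 1" using T(1) by (metis mult_minus_left mult_minus_right mult_1_left minus_minus)
  have t2: "\<forall>f\<in>edges H. \<forall>a b. ends H f = {a, b} \<longrightarrow> sgn H2 f = sgn H f * \<tau>' a * \<tau>' b"
  proof (intro ballI allI impI)
    fix f a b assume f: "f \<in> edges H" and ab: "ends H f = {a, b}"
    have s1: "sgn H1 f = sgn H f * \<tau> a * \<tau> b" using T(5) f ab by blast
    have s2: "sgn H2 f = (if v \<in> {a, b} \<and> card {a, b} = 2 then - sgn H1 f else sgn H1 f)"
      using v T(4) ab by (simp add: switch_simps)
    show "sgn H2 f = sgn H f * \<tau>' a * \<tau>' b"
    proof (cases "a = b")
      case True
      have "\<tau>' a * \<tau>' a = \<tau> a * \<tau> a" unfolding \<tau>'_def by simp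
      then show ?thesis using s1 s2 True by (simp add: mult.assoc)
    next
      case False
      then have c: "card {a, b} = 2" by simp
      show ?thesis
        using s1 s2 c False unfolding \<tau>'_def by (cases "v = a"; cases "v = b") (auto simp: algebra_simps)
    qed
  qed
  show ?case using t1 t2 T(2-4) v by (intro exI[of _ \<tau>']) (simp add: switch_simps)
qed

lemma less_S: "(i::nat) < Suc n \<Longrightarrow> i \<noteq> n \<Longrightarrow> i < n" by auto

lemma less_SS: "(f::nat) < Suc (Suc m) \<Longrightarrow> f < m \<or> f = m \<or> f = Suc m" by auto

context ext begin

lemma R_case:
  fixes R Gc :: "(nat, nat) sgraph" and n m :: nat
  assumes sim: "sim_R H x y R 0 1"
    and Rv: "verts R = {..<n}" and Re: "edges R = {..<m}"
    and Gv: "verts Gc = {..<Suc n}" and Ge: "edges Gc = {..<Suc (Suc m)}"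
    and GR: "\<forall>j<m. ends Gc j = ends R j \<and> sgn Gc j = sgn R j"
    and Gm: "ends Gc m = {1, n}" "sgn Gc m = 1"
    and GSm: "ends Gc (Suc m) = {0, n}" "sgn Gc (Suc m) = -1"
    and e01: "\<forall>j<m. ends R j = {0, 1} \<longrightarrow> sgn R j = 1"
    and n1: "1 < n"
    and cov: "has_psi_star2 Gc 0 n (Suc m)"
  shows "has_psi_star2 G x z f2"
proof -
  obtain H' where sw: "sw_equiv H H'" and iso: "iso_2t H' x y R 0 1" using sim unfolding sim_R_def by blast
  obtain \<tau>0 where T: "\<forall>a. \<tau>0 a = 1 \<or> \<tau>0 a = -1" "verts H' = verts H" "edges H' = edges H" "ends H' = ends H"
    "\<forall>f\<in>edges H. \<forall>a b. ends H f = {a, b} \<longrightarrow> sgn H' f = sgn H f * \<tau>0 a * \<tau>0 b" using sw_tau[OF sw] by blast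
  obtain \<phi>0 \<psi>0 where I: "bij_betw \<phi>0 (verts H) (verts R)" "bij_betw \<psi>0 (edges H) (edges R)"
    "\<forall>f\<in>edges H. ends R (\<psi>0 f) = \<phi>0 ` ends H f \<and> sgn R (\<psi>0 f) = sgn H' f" "\<phi>0 x = 0" "\<phi>0 y = 1"
    using iso T(2-4) unfolding iso_2t_def by auto
  have sq: "\<And>a. \<tau>0 a * \<tau>0 a = 1" using T(1) by (metis mult_minus_left mult_minus_right mult_1_left minus_minus)
  have endsH: "\<And>f. f \<in> edges H \<Longrightarrow> ends H f \<subseteq> verts H" using wf unfolding wf_sgraph_def by blast
  define \<tau> where "\<tau> = \<tau>0(z := s1 * \<tau>0 y)"
  define \<phi> where "\<phi> i = (if i = n then z else inv_into (verts H) \<phi>0 i)" for i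
  define \<psi> where "\<psi> j = (if j = m then f1 else if j = Suc m then f2 else inv_into (edges H) \<psi>0 j)" for j
  have injp: "inj_on \<phi>0 (verts H)" and imp: "\<phi>0 ` verts H = {..<n}" using I(1) Rv by (auto simp: bij_betw_def)
  have injq: "inj_on \<psi>0 (edges H)" and imq: "\<psi>0 ` edges H = {..<m}" using I(2) Re by (auto simp: bij_betw_def)
  have phiH: "\<And>i. i < n \<Longrightarrow> \<phi> i \<in> verts H \<and> \<phi>0 (\<phi> i) = i"
    unfolding \<phi>_def using imp by (auto intro: inv_into_into f_inv_into_f)
  have phi0: "\<And>v. v \<in> verts H \<Longrightarrow> \<phi> (\<phi>0 v) = v"
  proof -
    fix v assume v: "v \<in> verts H"
    then have "\<phi>0 v < n" using imp by auto
    then show "\<phi> (\<phi>0 v) = v" unfolding \<phi>_def using inv_into_f_f[OF injp v] by simp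
  qed
  have psiH: "\<And>j. j < m \<Longrightarrow> \<psi> j \<in> edges H \<and> \<psi>0 (\<psi> j) = j"
    unfolding \<psi>_def using imq by (auto intro: inv_into_into f_inv_into_f)
  have psi0: "\<And>h. h \<in> edges H \<Longrightarrow> \<psi> (\<psi>0 h) = h"
  proof -
    fix h assume h: "h \<in> edges H"
    then have "\<psi>0 h < m" using imq by auto
    then show "\<psi> (\<psi>0 h) = h" unfolding \<psi>_def using inv_into_f_f[OF injq h] by simp
  qed
  have px: "\<phi> 0 = x" using phi0[OF xV] I(4) by simp
  have py: "\<phi> 1 = y" using phi0[OF yV] I(5) by simp
  have pz: "\<phi> n = z" unfolding \<phi>_def by simp
  have qf2: "\<psi> (Suc m) = f2" unfolding \<psi>_def by simp
  have qf1: "\<psi> m = f1" unfolding \<psi>_def by simp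
  have se: "sgn H e = \<tau>0 x * \<tau>0 y"
  proof -
    have "\<psi>0 e < m" using imq eE by auto
    moreover have "ends R (\<psi>0 e) = {0, 1}" using I(3) eE ee I(4,5) by simp
    ultimately have "sgn R (\<psi>0 e) = 1" using e01 by blast
    then have "sgn H' e = 1" using I(3) eE by simp
    then have "1 = sgn H e * \<tau>0 x * \<tau>0 y" using T(5) eE ee by simp
    then have "\<tau>0 x * \<tau>0 y = sgn H e * (\<tau>0 x * \<tau>0 x) * (\<tau>0 y * \<tau>0 y)" by (simp add: algebra_simps)
    then show ?thesis using sq by simp
  qed
  have tx: "\<tau> x = \<tau>0 x" and ty: "\<tau> y = \<tau>0 y" and tz: "\<tau> z = s1 * \<tau>0 y"
    unfolding \<tau>_def using xz yz by auto
  have vc: "\<And>i. i \<in> verts Gc \<Longrightarrow> (i = n \<and> \<phi> i = z) \<or> (i < n \<and> \<phi> i \<in> verts H \<and> \<phi>0 (\<phi> i) = i)"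
  proof -
    fix i assume "i \<in> verts Gc"
    then have iS: "i < Suc n" using Gv by simp
    show "(i = n \<and> \<phi> i = z) \<or> (i < n \<and> \<phi> i \<in> verts H \<and> \<phi>0 (\<phi> i) = i)"
    proof (cases "i = n")
      case True then show ?thesis using pz by simp
    next
      case False
      then have "i < n" using less_S iS by blast
      then show ?thesis using phiH[of i] by simp
    qed
  qed
  have i1: "inj_on \<phi> (verts Gc)"
  proof (rule inj_on_inverseI)
    fix i assume i: "i \<in> verts Gc"
    show "(\<lambda>v. if v = z then n else \<phi>0 v) (\<phi> i) = i"
    proof (cases "i = n")
      case True then show ?thesis using pz by simp
    next
      case False
      then have "\<phi> i \<in> verts H \<and> \<phi>0 (\<phi> i) = i" using vc[OF i] by simp
      then show ?thesis using zV by auto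
    qed
  qed
  have i2: "\<phi> ` verts Gc \<subseteq> verts G"
  proof
    fix v assume "v \<in> \<phi> ` verts Gc"
    then obtain i where i: "i \<in> verts Gc" "v = \<phi> i" by blast
    from vc[OF i(1)] show "v \<in> verts G" using i(2) zG G_verts pz by (elim disjE) auto
  qed
  have i3: "inj_on \<psi> (edges Gc)"
  proof (rule inj_on_inverseI)
    fix k assume k: "k \<in> edges Gc"
    then have "k < Suc (Suc m)" using Ge by simp
    then consider "k < m" | "k = m" | "k = Suc m" using less_SS by blast
    then show "(\<lambda>g. if g = f1 then m else if g = f2 then Suc m else \<psi>0 g) (\<psi> k) = k"
    proof cases
      case 1
      then have "\<psi> k \<in> edges H" "\<psi>0 (\<psi> k) = k" using psiH by auto
      then show ?thesis using f1E f2E by auto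
    next
      case 2 then show ?thesis using qf1 by simp
    next
      case 3 then show ?thesis using qf2 f12 by simp
    qed
  qed
  have i4: "\<psi> ` edges Gc \<subseteq> edges G"
    proof
      fix v assume "v \<in> \<psi> ` edges Gc"
      then obtain i where i0: "i \<in> edges Gc" "v = \<psi> i" by blast
      then have i: "i < Suc (Suc m)" "v = \<psi> i" using Ge by simp_all
      then consider "i < m" | "i = m" | "i = Suc m" using less_SS by blast
      then show "v \<in> edges G"
      proof cases
        case 1 then show ?thesis using psiH i G_edges by auto
      next
        case 2 then show ?thesis using i qf1 f1G by simp
      next
        case 3 then show ?thesis using i qf2 f2G by simp
      qed
    qed
  have ends_ok: "\<And>f. f \<in> edges Gc \<Longrightarrow> ends G (\<psi> f) = \<phi> ` ends Gc f \<and>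
       (\<forall>a b. ends Gc f = {a, b} \<longrightarrow> sgn G (\<psi> f) = sgn Gc f * \<tau> (\<phi> a) * \<tau> (\<phi> b))"
  proof -
    fix f assume f: "f \<in> edges Gc"
    have "f < Suc (Suc m)" using f Ge by simp
    then have c: "f < m \<or> f = m \<or> f = Suc m" by (rule less_SS)
    show "ends G (\<psi> f) = \<phi> ` ends Gc f \<and>
       (\<forall>a b. ends Gc f = {a, b} \<longrightarrow> sgn G (\<psi> f) = sgn Gc f * \<tau> (\<phi> a) * \<tau> (\<phi> b))"
    proof -
      { assume fm: "f < m"
        define h where "h = \<psi> f"
        have h: "h \<in> edges H" "\<psi>0 h = f" using psiH[OF fm] h_def by auto
        have eR: "ends R f = \<phi>0 ` ends H h" using I(3) h by auto
        have eRs: "ends R f \<subseteq> {..<n}"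
        proof -
          have "\<phi>0 ` ends H h \<subseteq> \<phi>0 ` verts H" by (rule image_mono[OF endsH[OF h(1)]])
          then show ?thesis using eR imp by simp
        qed
        have GRf: "ends Gc f = ends R f" "sgn Gc f = sgn R f" using GR fm by auto
        have "\<phi> ` ends Gc f = \<phi> ` \<phi>0 ` ends H h" using GRf eR by simp
        also have "\<dots> = (\<lambda>v. \<phi> (\<phi>0 v)) ` ends H h" by (simp add: image_image)
        also have "\<dots> = id ` ends H h"
          by (rule image_cong) (use endsH[OF h(1)] phi0 in auto)
        finally have eH: "ends H h = \<phi> ` ends Gc f" by simp
        have ends1: "ends G (\<psi> f) = \<phi> ` ends Gc f" using G_H[OF h(1)] eH h_def by simp
        have "\<forall>a b. ends Gc f = {a, b} \<longrightarrow> sgn G (\<psi> f) = sgn Gc f * \<tau> (\<phi> a) * \<tau> (\<phi> b)"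
        proof (intro allI impI)
          fix a b assume ab: "ends Gc f = {a, b}"
          have "a \<in> ends R f" "b \<in> ends R f" using ab GRf by auto
          then have abn: "a < n" "b < n" using eRs by auto
          have pa: "\<phi> a \<in> verts H" "\<phi> b \<in> verts H" using phiH[OF abn(1)] phiH[OF abn(2)] by auto
          have ta: "\<tau> (\<phi> a) = \<tau>0 (\<phi> a)" "\<tau> (\<phi> b) = \<tau>0 (\<phi> b)"
            using pa zV unfolding \<tau>_def by auto
          have "ends H h = {\<phi> a, \<phi> b}" using eH ab by simp
          then have s': "sgn H' h = sgn H h * \<tau>0 (\<phi> a) * \<tau>0 (\<phi> b)" using T(5)[rule_format, OF h(1)] by blast
          have s'': "sgn Gc f = sgn H' h" using GRf I(3) h by auto
          have s3: "sgn G (\<psi> f) = sgn H h" using G_H[OF h(1)] h_def by simp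
          have "sgn Gc f * \<tau> (\<phi> a) * \<tau> (\<phi> b) = sgn H h * (\<tau>0 (\<phi> a) * \<tau>0 (\<phi> a)) * (\<tau>0 (\<phi> b) * \<tau>0 (\<phi> b))"
            unfolding s'' s' ta by (simp only: mult.assoc mult.left_commute)
          then show "sgn G (\<psi> f) = sgn Gc f * \<tau> (\<phi> a) * \<tau> (\<phi> b)"
            using s3 sq[of "\<phi> a"] sq[of "\<phi> b"] by simp
        qed
        with ends1 have ?thesis by blast }
      moreover
      { assume fm: "f = m"
        have ?thesis
        proof
          show "ends G (\<psi> f) = \<phi> ` ends Gc f" using fm qf1 G_f1 Gm py pz by simp
          show "\<forall>a b. ends Gc f = {a, b} \<longrightarrow> sgn G (\<psi> f) = sgn Gc f * \<tau> (\<phi> a) * \<tau> (\<phi> b)"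
          proof (intro allI impI)
            fix a b assume "ends Gc f = {a, b}"
            then have "(a = 1 \<and> b = n) \<or> (a = n \<and> b = 1)" using fm Gm by (auto simp: doubleton_eq_iff)
            then have "\<tau> (\<phi> a) * \<tau> (\<phi> b) = \<tau>0 y * (s1 * \<tau>0 y)" using py pz ty tz by auto
            also have "\<dots> = s1" using sq[of y] by (simp add: algebra_simps)
            finally show "sgn G (\<psi> f) = sgn Gc f * \<tau> (\<phi> a) * \<tau> (\<phi> b)" using fm qf1 G_f1 Gm by (simp add: mult.assoc)
          qed
        qed }
      moreover
      { assume fm: "f = Suc m"
        have ?thesis
        proof
          show "ends G (\<psi> f) = \<phi> ` ends Gc f" using fm qf2 G_f2 GSm px pz by simp
          show "\<forall>a b. ends Gc f = {a, b} \<longrightarrow> sgn G (\<psi> f) = sgn Gc f * \<tau> (\<phi> a) * \<tau> (\<phi> b)"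
          proof (intro allI impI)
            fix a b assume "ends Gc f = {a, b}"
            then have "(a = 0 \<and> b = n) \<or> (a = n \<and> b = 0)" using fm GSm by (auto simp: doubleton_eq_iff)
            then have "\<tau> (\<phi> a) * \<tau> (\<phi> b) = \<tau>0 x * (s1 * \<tau>0 y)" using px pz tx tz by auto
            also have "\<dots> = sgn H e * s1" using se by (simp add: algebra_simps)
            also have "\<dots> = - s2" using es1 .
            finally show "sgn G (\<psi> f) = sgn Gc f * \<tau> (\<phi> a) * \<tau> (\<phi> b)" using fm qf2 G_f2 GSm by (simp add: mult.assoc)
          qed
        qed }
      ultimately show ?thesis using c by blast
    qed
  qed
  have e5: "\<forall>f\<in>edges Gc. ends G (\<psi> f) = \<phi> ` ends Gc f" using ends_ok by blast
  have e6: "\<forall>f\<in>edges Gc. \<forall>a b. ends Gc f = {a, b} \<longrightarrow> sgn G (\<psi> f) = sgn Gc f * \<tau> (\<phi> a) * \<tau> (\<phi> b)"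
    using ends_ok by blast
  have e7: "\<forall>a. \<tau> (\<phi> a) = 1 \<or> \<tau> (\<phi> a) = -1" unfolding \<tau>_def using T(1) s1 by auto
  have E: "emb Gc G \<phi> \<psi> (\<lambda>i. \<tau> (\<phi> i))"
    unfolding emb_def by (intro conjI i1 i2 i3 i4 e5 e6 e7)
  have bij: "bij_betw \<psi> (edges Gc) (edges G)"
  proof -
    have "inj_on \<psi> (edges Gc)" using i3 .
    moreover have "\<psi> ` edges Gc = edges G"
    proof
      show "\<psi> ` edges Gc \<subseteq> edges G" using i4 .
      show "edges G \<subseteq> \<psi> ` edges Gc"
      proof
        fix g assume "g \<in> edges G"
        then consider "g = f1" | "g = f2" | "g \<in> edges H" using G_edges by auto
        then show "g \<in> \<psi> ` edges Gc"
        proof cases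
          case 1 then show ?thesis using qf1 Ge by (metis image_eqI lessThan_iff less_Suc_eq)
        next
          case 2 then show ?thesis using qf2 Ge by (metis image_eqI lessThan_iff lessI)
        next
          case 3
          then have "\<psi>0 g < m" using imq by auto
          then show ?thesis using psi0[OF 3] Ge by (metis image_eqI lessThan_iff less_Suc_eq)
        qed
      qed
    qed
    ultimately show ?thesis by (simp add: bij_betw_def)
  qed
  have "0 \<in> verts Gc" "n \<in> verts Gc" using Gv by auto
  from emb_psi_star[OF E bij this cov] show ?thesis using px pz qf2 by simp
qed

end


lemma pathI2: "path_seq G vs es \<Longrightarrow> hd vs = a \<Longrightarrow> last vs = b \<Longrightarrow> sigma G (set vs, set es) = s \<Longrightarrow>
  is_path G a b (set vs, set es) \<and> sigma G (set vs, set es) = s"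
  using is_pathI[of G vs es a b] by blast

lemma circI2: "path_seq G vs es \<Longrightarrow> g \<in> edges G \<Longrightarrow> g \<notin> set es \<Longrightarrow> ends G g = {last vs, hd vs} \<Longrightarrow>
  sigma G (set vs, set (es @ [g])) = s \<Longrightarrow> is_circuit G (set vs, set (es @ [g])) \<and> sigma G (set vs, set (es @ [g])) = s"
  using close_circuit[of G vs es g] by blast

lemma unbI: "is_circuit G C \<and> sigma G C = -1 \<Longrightarrow> unbalanced_circuit G C"
  unfolding unbalanced_circuit_def by blast

lemma balI: "is_circuit G C \<and> sigma G C = 1 \<Longrightarrow> signed_circuit G C"
  unfolding signed_circuit_def balanced_circuit_def by blast

lemma tpI: "path_seq G pv pe \<Longrightarrow> hd pv = u \<Longrightarrow> unbalanced_circuit G C \<Longrightarrow> set pv \<inter> fst C = {last pv} \<Longrightarrow>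
  T = (set pv \<union> fst C, set pe \<union> snd C) \<Longrightarrow> is_tadpole G u T"
  unfolding is_tadpole_def tadpole_pc_def
  by (rule exI[of _ "(set pv, set pe)"], rule exI[of _ C]) (use is_pathI[of G pv pe u "last pv"] in auto)

lemma tpcI: "path_seq G pv pe \<Longrightarrow> hd pv = u \<Longrightarrow> unbalanced_circuit G C \<Longrightarrow> set pv \<inter> fst C = {last pv} \<Longrightarrow>
  T = (set pv \<union> fst C, set pe \<union> snd C) \<Longrightarrow> f \<in> set pe \<Longrightarrow> tadpole_path_contains G u T f"
  unfolding tadpole_path_contains_def tadpole_pc_def
  by (rule exI[of _ "(set pv, set pe)"], rule exI[of _ C]) (use is_pathI[of G pv pe u "last pv"] in auto)

lemma bb1I: "unbalanced_circuit G Ca \<Longrightarrow> unbalanced_circuit G Cb \<Longrightarrow> snd Ca \<inter> snd Cb = {} \<Longrightarrow>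
  fst Ca \<inter> fst Cb = {v} \<Longrightarrow> B = (fst Ca \<union> fst Cb \<union> {v}, snd Ca \<union> snd Cb \<union> {}) \<Longrightarrow> signed_circuit G B"
  unfolding signed_circuit_def is_barbell_def
  apply (rule disjI2, rule exI[of _ Ca], rule exI[of _ Cb], rule exI[of _ "({v}, {})"])
  by auto

lemma bb2I: "unbalanced_circuit G Ca \<Longrightarrow> unbalanced_circuit G Cb \<Longrightarrow> snd Ca \<inter> snd Cb = {} \<Longrightarrow>
  fst Ca \<inter> fst Cb = {} \<Longrightarrow> a \<in> fst Ca \<Longrightarrow> b \<in> fst Cb \<Longrightarrow> path_seq G pv pe \<Longrightarrow> hd pv = a \<Longrightarrow> last pv = b \<Longrightarrow>
  set pv \<inter> (fst Ca \<union> fst Cb) = {a, b} \<Longrightarrow>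
  B = (fst Ca \<union> fst Cb \<union> set pv, snd Ca \<union> snd Cb \<union> set pe) \<Longrightarrow> signed_circuit G B"
  unfolding signed_circuit_def is_barbell_def
  apply (rule disjI2, rule exI[of _ Ca], rule exI[of _ Cb], rule exI[of _ "(set pv, set pe)"])
  using is_pathI[of G pv pe a b] by auto

definition "Gc2 = mk_sg 4 [(0, 1, 1), (0, 2, 1), (2, 1, 1), (2, 1, -1), (1, 3, 1), (0, 3, -1)]"

lemma Gc2_pp0: "is_path Gc2 0 3 (set [0, 1, 3], set [0, 4]) \<and> sigma Gc2 (set [0, 1, 3], set [0, 4]) = 1"
  by (rule pathI2) (simp_all add: Gc2_def mk_sg_def path_seq_Cons path_seq_Nil sigma_def insert_commute)

lemma Gc2_pp1: "is_path Gc2 0 3 (set [0, 2, 1, 3], set [1, 2, 4]) \<and> sigma Gc2 (set [0, 2, 1, 3], set [1, 2, 4]) = 1"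
  by (rule pathI2) (simp_all add: Gc2_def mk_sg_def path_seq_Cons path_seq_Nil sigma_def insert_commute)

lemma Gc2_np0: "is_path Gc2 0 3 (set [0, 3], set [5]) \<and> sigma Gc2 (set [0, 3], set [5]) = -1"
  by (rule pathI2) (simp_all add: Gc2_def mk_sg_def path_seq_Cons path_seq_Nil sigma_def insert_commute)

lemma Gc2_np1: "is_path Gc2 0 3 (set [0, 3], set [5]) \<and> sigma Gc2 (set [0, 3], set [5]) = -1"
  by (rule pathI2) (simp_all add: Gc2_def mk_sg_def path_seq_Cons path_seq_Nil sigma_def insert_commute)

lemma Gc2_c0: "is_circuit Gc2 (set [2, 1, 0], set ([3, 0] @ [1])) \<and> sigma Gc2 (set [2, 1, 0], set ([3, 0] @ [1])) = -1"
  by (rule circI2) (simp_all add: Gc2_def mk_sg_def path_seq_Cons path_seq_Nil sigma_def insert_commute)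

lemma Gc2_t0: "is_tadpole Gc2 0 (set [0] \<union> fst (set [2, 1, 0], set ([3, 0] @ [1])), set [] \<union> snd (set [2, 1, 0], set ([3, 0] @ [1])))"
  by (rule tpI[where pv="[0]" and pe="[]" and C="(set [2, 1, 0], set ([3, 0] @ [1]))", OF _ _ unbI[OF Gc2_c0]]) (simp_all add: Gc2_def mk_sg_def path_seq_Cons path_seq_Nil sigma_def insert_commute)

lemma Gc2_c1: "is_circuit Gc2 (set [2, 1], set ([3] @ [2])) \<and> sigma Gc2 (set [2, 1], set ([3] @ [2])) = -1"
  by (rule circI2) (simp_all add: Gc2_def mk_sg_def path_seq_Cons path_seq_Nil sigma_def insert_commute)

lemma Gc2_t1: "is_tadpole Gc2 0 (set [0, 3, 1] \<union> fst (set [2, 1], set ([3] @ [2])), set [5, 4] \<union> snd (set [2, 1], set ([3] @ [2])))"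
  by (rule tpI[where pv="[0, 3, 1]" and pe="[5, 4]" and C="(set [2, 1], set ([3] @ [2]))", OF _ _ unbI[OF Gc2_c1]]) (simp_all add: Gc2_def mk_sg_def path_seq_Cons path_seq_Nil sigma_def insert_commute)

lemma Gc2_t1c: "tadpole_path_contains Gc2 0 (set [0, 3, 1] \<union> fst (set [2, 1], set ([3] @ [2])), set [5, 4] \<union> snd (set [2, 1], set ([3] @ [2]))) 5"
  by (rule tpcI[where pv="[0, 3, 1]" and pe="[5, 4]" and C="(set [2, 1], set ([3] @ [2]))", OF _ _ unbI[OF Gc2_c1]]) (simp_all add: Gc2_def mk_sg_def path_seq_Cons path_seq_Nil sigma_def insert_commute)

lemma Gc2_t2: "is_tadpole Gc2 3 (set [3, 1] \<union> fst (set [2, 1], set ([3] @ [2])), set [4] \<union> snd (set [2, 1], set ([3] @ [2])))"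
  by (rule tpI[where pv="[3, 1]" and pe="[4]" and C="(set [2, 1], set ([3] @ [2]))", OF _ _ unbI[OF Gc2_c1]]) (simp_all add: Gc2_def mk_sg_def path_seq_Cons path_seq_Nil sigma_def insert_commute)

lemma Gc2_t3: "is_tadpole Gc2 3 (set [3, 0] \<union> fst (set [2, 1, 0], set ([3, 0] @ [1])), set [5] \<union> snd (set [2, 1, 0], set ([3, 0] @ [1])))"
  by (rule tpI[where pv="[3, 0]" and pe="[5]" and C="(set [2, 1, 0], set ([3, 0] @ [1]))", OF _ _ unbI[OF Gc2_c0]]) (simp_all add: Gc2_def mk_sg_def path_seq_Cons path_seq_Nil sigma_def insert_commute)

lemma Gc2_t3c: "tadpole_path_contains Gc2 3 (set [3, 0] \<union> fst (set [2, 1, 0], set ([3, 0] @ [1])), set [5] \<union> snd (set [2, 1, 0], set ([3, 0] @ [1]))) 5"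
  by (rule tpcI[where pv="[3, 0]" and pe="[5]" and C="(set [2, 1, 0], set ([3, 0] @ [1]))", OF _ _ unbI[OF Gc2_c0]]) (simp_all add: Gc2_def mk_sg_def path_seq_Cons path_seq_Nil sigma_def insert_commute)

lemma Gc2_s0: "signed_circuit Gc2 (set [2, 1, 0], set ([2, 0] @ [1]))"
  by (rule balI) (rule circI2, simp_all add: Gc2_def mk_sg_def path_seq_Cons path_seq_Nil sigma_def insert_commute)

lemma Gc2_s1: "signed_circuit Gc2 (set [2, 1, 0], set ([2, 0] @ [1]))"
  by (rule balI) (rule circI2, simp_all add: Gc2_def mk_sg_def path_seq_Cons path_seq_Nil sigma_def insert_commute)

lemma Gc2_s2: "signed_circuit Gc2 (set [3, 0, 2, 1], set ([5, 1, 3] @ [4]))"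
  by (rule balI) (rule circI2, simp_all add: Gc2_def mk_sg_def path_seq_Cons path_seq_Nil sigma_def insert_commute)

lemma Gc2_c2: "is_circuit Gc2 (set [3, 0, 1], set ([5, 0] @ [4])) \<and> sigma Gc2 (set [3, 0, 1], set ([5, 0] @ [4])) = -1"
  by (rule circI2) (simp_all add: Gc2_def mk_sg_def path_seq_Cons path_seq_Nil sigma_def insert_commute)

lemma Gc2_s3: "signed_circuit Gc2 (fst (set [3, 0, 1], set ([5, 0] @ [4])) \<union> fst (set [2, 1], set ([3] @ [2])) \<union> {1}, snd (set [3, 0, 1], set ([5, 0] @ [4])) \<union> snd (set [2, 1], set ([3] @ [2])) \<union> {})"
  by (rule bb1I[where Ca="(set [3, 0, 1], set ([5, 0] @ [4]))" and Cb="(set [2, 1], set ([3] @ [2]))" and v=1, OF unbI[OF Gc2_c2] unbI[OF Gc2_c1]]) (simp_all add: Gc2_def mk_sg_def path_seq_Cons path_seq_Nil sigma_def insert_commute)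

lemma Gc2_cover: "cover6 Gc2 [(set [0, 1, 3], set [0, 4]), (set [0, 2, 1, 3], set [1, 2, 4]), (set [0, 3], set [5]), (set [0, 3], set [5]), (set [0] \<union> fst (set [2, 1, 0], set ([3, 0] @ [1])), set [] \<union> snd (set [2, 1, 0], set ([3, 0] @ [1]))), (set [0, 3, 1] \<union> fst (set [2, 1], set ([3] @ [2])), set [5, 4] \<union> snd (set [2, 1], set ([3] @ [2]))), (set [3, 1] \<union> fst (set [2, 1], set ([3] @ [2])), set [4] \<union> snd (set [2, 1], set ([3] @ [2]))), (set [3, 0] \<union> fst (set [2, 1, 0], set ([3, 0] @ [1])), set [5] \<union> snd (set [2, 1, 0], set ([3, 0] @ [1]))), (set [2, 1, 0], set ([2, 0] @ [1])), (set [2, 1, 0], set ([2, 0] @ [1])), (set [3, 0, 2, 1], set ([5, 1, 3] @ [4])), (fst (set [3, 0, 1], set ([5, 0] @ [4])) \<union> fst (set [2, 1], set ([3] @ [2])) \<union> {1}, snd (set [3, 0, 1], set ([5, 0] @ [4])) \<union> snd (set [2, 1], set ([3] @ [2])) \<union> {})]"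
  unfolding cover6_def by (simp add: Gc2_def mk_sg_def lessThan_nat_numeral lessThan_Suc)

lemma Gc2_psi: "has_psi_star2 Gc2 0 3 5"
proof -
  have "psi_cover Gc2 0 3 2 [(set [0, 1, 3], set [0, 4]), (set [0, 2, 1, 3], set [1, 2, 4])] [(set [0, 3], set [5]), (set [0, 3], set [5])] [(set [0] \<union> fst (set [2, 1, 0], set ([3, 0] @ [1])), set [] \<union> snd (set [2, 1, 0], set ([3, 0] @ [1]))), (set [0, 3, 1] \<union> fst (set [2, 1], set ([3] @ [2])), set [5, 4] \<union> snd (set [2, 1], set ([3] @ [2])))] [(set [3, 1] \<union> fst (set [2, 1], set ([3] @ [2])), set [4] \<union> snd (set [2, 1], set ([3] @ [2]))), (set [3, 0] \<union> fst (set [2, 1, 0], set ([3, 0] @ [1])), set [5] \<union> snd (set [2, 1, 0], set ([3, 0] @ [1])))] [(set [2, 1, 0], set ([2, 0] @ [1])), (set [2, 1, 0], set ([2, 0] @ [1])), (set [3, 0, 2, 1], set ([5, 1, 3] @ [4])), (fst (set [3, 0, 1], set ([5, 0] @ [4])) \<union> fst (set [2, 1], set ([3] @ [2])) \<union> {1}, snd (set [3, 0, 1], set ([5, 0] @ [4])) \<union> snd (set [2, 1], set ([3] @ [2])) \<union> {})]"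
    unfolding psi_cover_def using Gc2_cover Gc2_pp0 Gc2_pp1 Gc2_np0 Gc2_np1 Gc2_t0 Gc2_t1 Gc2_t2 Gc2_t3 Gc2_t1c Gc2_t3c Gc2_s0 Gc2_s1 Gc2_s2 Gc2_s3 by simp
  moreover have "star_cond Gc2 0 3 5 [(set [0] \<union> fst (set [2, 1, 0], set ([3, 0] @ [1])), set [] \<union> snd (set [2, 1, 0], set ([3, 0] @ [1]))), (set [0, 3, 1] \<union> fst (set [2, 1], set ([3] @ [2])), set [5, 4] \<union> snd (set [2, 1], set ([3] @ [2])))]" unfolding star_cond_def using Gc2_t1c by simp
  moreover have "star_cond Gc2 3 0 5 [(set [3, 1] \<union> fst (set [2, 1], set ([3] @ [2])), set [4] \<union> snd (set [2, 1], set ([3] @ [2]))), (set [3, 0] \<union> fst (set [2, 1, 0], set ([3, 0] @ [1])), set [5] \<union> snd (set [2, 1, 0], set ([3, 0] @ [1])))]" unfolding star_cond_def using Gc2_t3c by simp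
  ultimately show ?thesis unfolding has_psi_star2_def by blast
qed

lemma Gc2_facts: "verts R2 = {..<3}" "edges R2 = {..<4}" "verts Gc2 = {..<Suc 3}" "edges Gc2 = {..<Suc (Suc 4)}"
  "\<forall>j<4. ends Gc2 j = ends R2 j \<and> sgn Gc2 j = sgn R2 j"
  "ends Gc2 4 = {1, 3}" "sgn Gc2 4 = 1" "ends Gc2 (Suc 4) = {0, 3}" "sgn Gc2 (Suc 4) = -1"
  "\<forall>j<4. ends R2 j = {0, 1} \<longrightarrow> sgn R2 j = 1" "1 < (3::nat)"
  by (simp_all add: Gc2_def R2_def mk_sg_def numeral_eq_Suc All_less_Suc doubleton_eq_iff)

definition "Gc4 = mk_sg 5 [(0, 2, 1), (2, 3, 1), (3, 1, 1), (0, 1, 1), (0, 3, 1), (2, 3, -1), (1, 4, 1), (0, 4, -1)]"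

lemma Gc4_pp0: "is_path Gc4 0 4 (set [0, 2, 3, 1, 4], set [0, 1, 2, 6]) \<and> sigma Gc4 (set [0, 2, 3, 1, 4], set [0, 1, 2, 6]) = 1"
  by (rule pathI2) (simp_all add: Gc4_def mk_sg_def path_seq_Cons path_seq_Nil sigma_def insert_commute)

lemma Gc4_pp1: "is_path Gc4 0 4 (set [0, 1, 4], set [3, 6]) \<and> sigma Gc4 (set [0, 1, 4], set [3, 6]) = 1"
  by (rule pathI2) (simp_all add: Gc4_def mk_sg_def path_seq_Cons path_seq_Nil sigma_def insert_commute)

lemma Gc4_np0: "is_path Gc4 0 4 (set [0, 4], set [7]) \<and> sigma Gc4 (set [0, 4], set [7]) = -1"
  by (rule pathI2) (simp_all add: Gc4_def mk_sg_def path_seq_Cons path_seq_Nil sigma_def insert_commute)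

lemma Gc4_np1: "is_path Gc4 0 4 (set [0, 4], set [7]) \<and> sigma Gc4 (set [0, 4], set [7]) = -1"
  by (rule pathI2) (simp_all add: Gc4_def mk_sg_def path_seq_Cons path_seq_Nil sigma_def insert_commute)

lemma Gc4_c0: "is_circuit Gc4 (set [3, 2, 0], set ([5, 0] @ [4])) \<and> sigma Gc4 (set [3, 2, 0], set ([5, 0] @ [4])) = -1"
  by (rule circI2) (simp_all add: Gc4_def mk_sg_def path_seq_Cons path_seq_Nil sigma_def insert_commute)

lemma Gc4_t0: "is_tadpole Gc4 0 (set [0] \<union> fst (set [3, 2, 0], set ([5, 0] @ [4])), set [] \<union> snd (set [3, 2, 0], set ([5, 0] @ [4])))"
  by (rule tpI[where pv="[0]" and pe="[]" and C="(set [3, 2, 0], set ([5, 0] @ [4]))", OF _ _ unbI[OF Gc4_c0]]) (simp_all add: Gc4_def mk_sg_def path_seq_Cons path_seq_Nil sigma_def insert_commute)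

lemma Gc4_c1: "is_circuit Gc4 (set [3, 2], set ([5] @ [1])) \<and> sigma Gc4 (set [3, 2], set ([5] @ [1])) = -1"
  by (rule circI2) (simp_all add: Gc4_def mk_sg_def path_seq_Cons path_seq_Nil sigma_def insert_commute)

lemma Gc4_t1: "is_tadpole Gc4 0 (set [0, 4, 1, 3] \<union> fst (set [3, 2], set ([5] @ [1])), set [7, 6, 2] \<union> snd (set [3, 2], set ([5] @ [1])))"
  by (rule tpI[where pv="[0, 4, 1, 3]" and pe="[7, 6, 2]" and C="(set [3, 2], set ([5] @ [1]))", OF _ _ unbI[OF Gc4_c1]]) (simp_all add: Gc4_def mk_sg_def path_seq_Cons path_seq_Nil sigma_def insert_commute)

lemma Gc4_t1c: "tadpole_path_contains Gc4 0 (set [0, 4, 1, 3] \<union> fst (set [3, 2], set ([5] @ [1])), set [7, 6, 2] \<union> snd (set [3, 2], set ([5] @ [1]))) 7"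
  by (rule tpcI[where pv="[0, 4, 1, 3]" and pe="[7, 6, 2]" and C="(set [3, 2], set ([5] @ [1]))", OF _ _ unbI[OF Gc4_c1]]) (simp_all add: Gc4_def mk_sg_def path_seq_Cons path_seq_Nil sigma_def insert_commute)

lemma Gc4_t2: "is_tadpole Gc4 4 (set [4, 1, 3] \<union> fst (set [3, 2], set ([5] @ [1])), set [6, 2] \<union> snd (set [3, 2], set ([5] @ [1])))"
  by (rule tpI[where pv="[4, 1, 3]" and pe="[6, 2]" and C="(set [3, 2], set ([5] @ [1]))", OF _ _ unbI[OF Gc4_c1]]) (simp_all add: Gc4_def mk_sg_def path_seq_Cons path_seq_Nil sigma_def insert_commute)

lemma Gc4_t3: "is_tadpole Gc4 4 (set [4, 0] \<union> fst (set [3, 2, 0], set ([5, 0] @ [4])), set [7] \<union> snd (set [3, 2, 0], set ([5, 0] @ [4])))"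
  by (rule tpI[where pv="[4, 0]" and pe="[7]" and C="(set [3, 2, 0], set ([5, 0] @ [4]))", OF _ _ unbI[OF Gc4_c0]]) (simp_all add: Gc4_def mk_sg_def path_seq_Cons path_seq_Nil sigma_def insert_commute)

lemma Gc4_t3c: "tadpole_path_contains Gc4 4 (set [4, 0] \<union> fst (set [3, 2, 0], set ([5, 0] @ [4])), set [7] \<union> snd (set [3, 2, 0], set ([5, 0] @ [4]))) 7"
  by (rule tpcI[where pv="[4, 0]" and pe="[7]" and C="(set [3, 2, 0], set ([5, 0] @ [4]))", OF _ _ unbI[OF Gc4_c0]]) (simp_all add: Gc4_def mk_sg_def path_seq_Cons path_seq_Nil sigma_def insert_commute)

lemma Gc4_s0: "signed_circuit Gc4 (set [3, 0, 2], set ([4, 0] @ [1]))"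
  by (rule balI) (rule circI2, simp_all add: Gc4_def mk_sg_def path_seq_Cons path_seq_Nil sigma_def insert_commute)

lemma Gc4_s1: "signed_circuit Gc4 (set [3, 0, 1], set ([4, 3] @ [2]))"
  by (rule balI) (rule circI2, simp_all add: Gc4_def mk_sg_def path_seq_Cons path_seq_Nil sigma_def insert_commute)

lemma Gc4_s2: "signed_circuit Gc4 (set [3, 0, 1], set ([4, 3] @ [2]))"
  by (rule balI) (rule circI2, simp_all add: Gc4_def mk_sg_def path_seq_Cons path_seq_Nil sigma_def insert_commute)

lemma Gc4_s3: "signed_circuit Gc4 (set [3, 0, 1], set ([4, 3] @ [2]))"
  by (rule balI) (rule circI2, simp_all add: Gc4_def mk_sg_def path_seq_Cons path_seq_Nil sigma_def insert_commute)

lemma Gc4_c2: "is_circuit Gc4 (set [4, 0, 1], set ([7, 3] @ [6])) \<and> sigma Gc4 (set [4, 0, 1], set ([7, 3] @ [6])) = -1"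
  by (rule circI2) (simp_all add: Gc4_def mk_sg_def path_seq_Cons path_seq_Nil sigma_def insert_commute)

lemma Gc4_s4: "signed_circuit Gc4 (fst (set [4, 0, 1], set ([7, 3] @ [6])) \<union> fst (set [3, 2], set ([5] @ [1])) \<union> set [0, 2], snd (set [4, 0, 1], set ([7, 3] @ [6])) \<union> snd (set [3, 2], set ([5] @ [1])) \<union> set [0])"
  by (rule bb2I[where Ca="(set [4, 0, 1], set ([7, 3] @ [6]))" and Cb="(set [3, 2], set ([5] @ [1]))" and pv="[0, 2]" and pe="[0]" and a=0 and b=2, OF unbI[OF Gc4_c2] unbI[OF Gc4_c1]]) (simp_all add: Gc4_def mk_sg_def path_seq_Cons path_seq_Nil sigma_def insert_commute)

lemma Gc4_s5: "signed_circuit Gc4 (fst (set [4, 0, 1], set ([7, 3] @ [6])) \<union> fst (set [3, 2], set ([5] @ [1])) \<union> set [0, 2], snd (set [4, 0, 1], set ([7, 3] @ [6])) \<union> snd (set [3, 2], set ([5] @ [1])) \<union> set [0])"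
  by (rule bb2I[where Ca="(set [4, 0, 1], set ([7, 3] @ [6]))" and Cb="(set [3, 2], set ([5] @ [1]))" and pv="[0, 2]" and pe="[0]" and a=0 and b=2, OF unbI[OF Gc4_c2] unbI[OF Gc4_c1]]) (simp_all add: Gc4_def mk_sg_def path_seq_Cons path_seq_Nil sigma_def insert_commute)

lemma Gc4_cover: "cover6 Gc4 [(set [0, 2, 3, 1, 4], set [0, 1, 2, 6]), (set [0, 1, 4], set [3, 6]), (set [0, 4], set [7]), (set [0, 4], set [7]), (set [0] \<union> fst (set [3, 2, 0], set ([5, 0] @ [4])), set [] \<union> snd (set [3, 2, 0], set ([5, 0] @ [4]))), (set [0, 4, 1, 3] \<union> fst (set [3, 2], set ([5] @ [1])), set [7, 6, 2] \<union> snd (set [3, 2], set ([5] @ [1]))), (set [4, 1, 3] \<union> fst (set [3, 2], set ([5] @ [1])), set [6, 2] \<union> snd (set [3, 2], set ([5] @ [1]))), (set [4, 0] \<union> fst (set [3, 2, 0], set ([5, 0] @ [4])), set [7] \<union> snd (set [3, 2, 0], set ([5, 0] @ [4]))), (set [3, 0, 2], set ([4, 0] @ [1])), (set [3, 0, 1], set ([4, 3] @ [2])), (set [3, 0, 1], set ([4, 3] @ [2])), (set [3, 0, 1], set ([4, 3] @ [2])), (fst (set [4, 0, 1], set ([7, 3] @ [6])) \<union> fst (set [3, 2], set ([5] @ [1])) \<union> set [0, 2], snd (set [4, 0, 1], set ([7, 3] @ [6])) \<union> snd (set [3, 2], set ([5] @ [1])) \<union> set [0]), (fst (set [4, 0,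 1], set ([7, 3] @ [6])) \<union> fst (set [3, 2], set ([5] @ [1])) \<union> set [0, 2], snd (set [4, 0, 1], set ([7, 3] @ [6])) \<union> snd (set [3, 2], set ([5] @ [1])) \<union> set [0])]"
  unfolding cover6_def by (simp add: Gc4_def mk_sg_def lessThan_nat_numeral lessThan_Suc)

lemma Gc4_psi: "has_psi_star2 Gc4 0 4 7"
proof -
  have "psi_cover Gc4 0 4 2 [(set [0, 2, 3, 1, 4], set [0, 1, 2, 6]), (set [0, 1, 4], set [3, 6])] [(set [0, 4], set [7]), (set [0, 4], set [7])] [(set [0] \<union> fst (set [3, 2, 0], set ([5, 0] @ [4])), set [] \<union> snd (set [3, 2, 0], set ([5, 0] @ [4]))), (set [0, 4, 1, 3] \<union> fst (set [3, 2], set ([5] @ [1])), set [7, 6, 2] \<union> snd (set [3, 2], set ([5] @ [1])))] [(set [4, 1, 3] \<union> fst (set [3, 2], set ([5] @ [1])), set [6, 2] \<union> snd (set [3, 2], set ([5] @ [1]))), (set [4, 0] \<union> fst (set [3, 2, 0], set ([5, 0] @ [4])), set [7] \<union> snd (set [3, 2, 0], set ([5, 0] @ [4])))] [(set [3, 0, 2], set ([4, 0] @ [1])), (set [3, 0, 1], set ([4, 3] @ [2])), (set [3, 0, 1], set ([4, 3] @ [2])), (set [3, 0, 1], set ([4, 3] @ [2])), (fst (set [4, 0, 1], set ([7, 3] @ [6])) \<union> fst (set [3, 2], set ([5] @ [1])) \<union> set [0, 2], snd (set [4, 0, 1], set ([7, 3] @ [6])) \<union> snd (set [3, 2], set ([5]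 @ [1])) \<union> set [0]), (fst (set [4, 0, 1], set ([7, 3] @ [6])) \<union> fst (set [3, 2], set ([5] @ [1])) \<union> set [0, 2], snd (set [4, 0, 1], set ([7, 3] @ [6])) \<union> snd (set [3, 2], set ([5] @ [1])) \<union> set [0])]"
    unfolding psi_cover_def using Gc4_cover Gc4_pp0 Gc4_pp1 Gc4_np0 Gc4_np1 Gc4_t0 Gc4_t1 Gc4_t2 Gc4_t3 Gc4_t1c Gc4_t3c Gc4_s0 Gc4_s1 Gc4_s2 Gc4_s3 Gc4_s4 Gc4_s5 by simp
  moreover have "star_cond Gc4 0 4 7 [(set [0] \<union> fst (set [3, 2, 0], set ([5, 0] @ [4])), set [] \<union> snd (set [3, 2, 0], set ([5, 0] @ [4]))), (set [0, 4, 1, 3] \<union> fst (set [3, 2], set ([5] @ [1])), set [7, 6, 2] \<union> snd (set [3, 2], set ([5] @ [1])))]" unfolding star_cond_def using Gc4_t1c by simp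
  moreover have "star_cond Gc4 4 0 7 [(set [4, 1, 3] \<union> fst (set [3, 2], set ([5] @ [1])), set [6, 2] \<union> snd (set [3, 2], set ([5] @ [1]))), (set [4, 0] \<union> fst (set [3, 2, 0], set ([5, 0] @ [4])), set [7] \<union> snd (set [3, 2, 0], set ([5, 0] @ [4])))]" unfolding star_cond_def using Gc4_t3c by simp
  ultimately show ?thesis unfolding has_psi_star2_def by blast
qed

lemma Gc4_facts: "verts R4 = {..<4}" "edges R4 = {..<6}" "verts Gc4 = {..<Suc 4}" "edges Gc4 = {..<Suc (Suc 6)}"
  "\<forall>j<6. ends Gc4 j = ends R4 j \<and> sgn Gc4 j = sgn R4 j"
  "ends Gc4 6 = {1, 4}" "sgn Gc4 6 = 1" "ends Gc4 (Suc 6) = {0, 4}" "sgn Gc4 (Suc 6) = -1"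
  "\<forall>j<6. ends R4 j = {0, 1} \<longrightarrow> sgn R4 j = 1" "1 < (4::nat)"
  by (simp_all add: Gc4_def R4_def mk_sg_def numeral_eq_Suc All_less_Suc doubleton_eq_iff)

definition "Gc5 = mk_sg 6 [(0, 3, 1), (3, 4, 1), (4, 2, 1), (0, 2, 1), (0, 1, 1), (1, 2, 1), (3, 4, -1), (1, 5, 1), (0, 5, -1)]"

lemma Gc5_pp0: "is_path Gc5 0 5 (set [0, 3, 4, 2, 1, 5], set [0, 1, 2, 5, 7]) \<and> sigma Gc5 (set [0, 3, 4, 2, 1, 5], set [0, 1, 2, 5, 7]) = 1"
  by (rule pathI2) (simp_all add: Gc5_def mk_sg_def path_seq_Cons path_seq_Nil sigma_def insert_commute)

lemma Gc5_pp1: "is_path Gc5 0 5 (set [0, 1, 5], set [4, 7]) \<and> sigma Gc5 (set [0, 1, 5], set [4, 7]) = 1"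
  by (rule pathI2) (simp_all add: Gc5_def mk_sg_def path_seq_Cons path_seq_Nil sigma_def insert_commute)

lemma Gc5_np0: "is_path Gc5 0 5 (set [0, 5], set [8]) \<and> sigma Gc5 (set [0, 5], set [8]) = -1"
  by (rule pathI2) (simp_all add: Gc5_def mk_sg_def path_seq_Cons path_seq_Nil sigma_def insert_commute)

lemma Gc5_np1: "is_path Gc5 0 5 (set [0, 5], set [8]) \<and> sigma Gc5 (set [0, 5], set [8]) = -1"
  by (rule pathI2) (simp_all add: Gc5_def mk_sg_def path_seq_Cons path_seq_Nil sigma_def insert_commute)

lemma Gc5_c0: "is_circuit Gc5 (set [4, 3, 0, 2], set ([6, 0, 3] @ [2])) \<and> sigma Gc5 (set [4, 3, 0, 2], set ([6, 0, 3] @ [2])) = -1"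
  by (rule circI2) (simp_all add: Gc5_def mk_sg_def path_seq_Cons path_seq_Nil sigma_def insert_commute)

lemma Gc5_t0: "is_tadpole Gc5 0 (set [0] \<union> fst (set [4, 3, 0, 2], set ([6, 0, 3] @ [2])), set [] \<union> snd (set [4, 3, 0, 2], set ([6, 0, 3] @ [2])))"
  by (rule tpI[where pv="[0]" and pe="[]" and C="(set [4, 3, 0, 2], set ([6, 0, 3] @ [2]))", OF _ _ unbI[OF Gc5_c0]]) (simp_all add: Gc5_def mk_sg_def path_seq_Cons path_seq_Nil sigma_def insert_commute)

lemma Gc5_c1: "is_circuit Gc5 (set [4, 3], set ([6] @ [1])) \<and> sigma Gc5 (set [4, 3], set ([6] @ [1])) = -1"
  by (rule circI2) (simp_all add: Gc5_def mk_sg_def path_seq_Cons path_seq_Nil sigma_def insert_commute)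

lemma Gc5_t1: "is_tadpole Gc5 0 (set [0, 5, 1, 2, 4] \<union> fst (set [4, 3], set ([6] @ [1])), set [8, 7, 5, 2] \<union> snd (set [4, 3], set ([6] @ [1])))"
  by (rule tpI[where pv="[0, 5, 1, 2, 4]" and pe="[8, 7, 5, 2]" and C="(set [4, 3], set ([6] @ [1]))", OF _ _ unbI[OF Gc5_c1]]) (simp_all add: Gc5_def mk_sg_def path_seq_Cons path_seq_Nil sigma_def insert_commute)

lemma Gc5_t1c: "tadpole_path_contains Gc5 0 (set [0, 5, 1, 2, 4] \<union> fst (set [4, 3], set ([6] @ [1])), set [8, 7, 5, 2] \<union> snd (set [4, 3], set ([6] @ [1]))) 8"
  by (rule tpcI[where pv="[0, 5, 1, 2, 4]" and pe="[8, 7, 5, 2]" and C="(set [4, 3], set ([6] @ [1]))", OF _ _ unbI[OF Gc5_c1]]) (simp_all add: Gc5_def mk_sg_def path_seq_Cons path_seq_Nil sigma_def insert_commute)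

lemma Gc5_t2: "is_tadpole Gc5 5 (set [5, 1, 2, 4] \<union> fst (set [4, 3], set ([6] @ [1])), set [7, 5, 2] \<union> snd (set [4, 3], set ([6] @ [1])))"
  by (rule tpI[where pv="[5, 1, 2, 4]" and pe="[7, 5, 2]" and C="(set [4, 3], set ([6] @ [1]))", OF _ _ unbI[OF Gc5_c1]]) (simp_all add: Gc5_def mk_sg_def path_seq_Cons path_seq_Nil sigma_def insert_commute)

lemma Gc5_t3: "is_tadpole Gc5 5 (set [5, 0] \<union> fst (set [4, 3, 0, 2], set ([6, 0, 3] @ [2])), set [8] \<union> snd (set [4, 3, 0, 2], set ([6, 0, 3] @ [2])))"
  by (rule tpI[where pv="[5, 0]" and pe="[8]" and C="(set [4, 3, 0, 2], set ([6, 0, 3] @ [2]))", OF _ _ unbI[OF Gc5_c0]]) (simp_all add: Gc5_def mk_sg_def path_seq_Cons path_seq_Nil sigma_def insert_commute)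

lemma Gc5_t3c: "tadpole_path_contains Gc5 5 (set [5, 0] \<union> fst (set [4, 3, 0, 2], set ([6, 0, 3] @ [2])), set [8] \<union> snd (set [4, 3, 0, 2], set ([6, 0, 3] @ [2]))) 8"
  by (rule tpcI[where pv="[5, 0]" and pe="[8]" and C="(set [4, 3, 0, 2], set ([6, 0, 3] @ [2]))", OF _ _ unbI[OF Gc5_c0]]) (simp_all add: Gc5_def mk_sg_def path_seq_Cons path_seq_Nil sigma_def insert_commute)

lemma Gc5_s0: "signed_circuit Gc5 (set [4, 2, 0, 3], set ([2, 3, 0] @ [1]))"
  by (rule balI) (rule circI2, simp_all add: Gc5_def mk_sg_def path_seq_Cons path_seq_Nil sigma_def insert_commute)

lemma Gc5_s1: "signed_circuit Gc5 (set [2, 1, 0], set ([5, 4] @ [3]))"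
  by (rule balI) (rule circI2, simp_all add: Gc5_def mk_sg_def path_seq_Cons path_seq_Nil sigma_def insert_commute)

lemma Gc5_s2: "signed_circuit Gc5 (set [2, 1, 0], set ([5, 4] @ [3]))"
  by (rule balI) (rule circI2, simp_all add: Gc5_def mk_sg_def path_seq_Cons path_seq_Nil sigma_def insert_commute)

lemma Gc5_s3: "signed_circuit Gc5 (set [2, 1, 0], set ([5, 4] @ [3]))"
  by (rule balI) (rule circI2, simp_all add: Gc5_def mk_sg_def path_seq_Cons path_seq_Nil sigma_def insert_commute)

lemma Gc5_c2: "is_circuit Gc5 (set [5, 0, 1], set ([8, 4] @ [7])) \<and> sigma Gc5 (set [5, 0, 1], set ([8, 4] @ [7])) = -1"
  by (rule circI2) (simp_all add: Gc5_def mk_sg_def path_seq_Cons path_seq_Nil sigma_def insert_commute)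

lemma Gc5_s4: "signed_circuit Gc5 (fst (set [5, 0, 1], set ([8, 4] @ [7])) \<union> fst (set [4, 3], set ([6] @ [1])) \<union> set [0, 3], snd (set [5, 0, 1], set ([8, 4] @ [7])) \<union> snd (set [4, 3], set ([6] @ [1])) \<union> set [0])"
  by (rule bb2I[where Ca="(set [5, 0, 1], set ([8, 4] @ [7]))" and Cb="(set [4, 3], set ([6] @ [1]))" and pv="[0, 3]" and pe="[0]" and a=0 and b=3, OF unbI[OF Gc5_c2] unbI[OF Gc5_c1]]) (simp_all add: Gc5_def mk_sg_def path_seq_Cons path_seq_Nil sigma_def insert_commute)

lemma Gc5_s5: "signed_circuit Gc5 (fst (set [5, 0, 1], set ([8, 4] @ [7])) \<union> fst (set [4, 3], set ([6] @ [1])) \<union> set [0, 3], snd (set [5, 0, 1], set ([8, 4] @ [7])) \<union> snd (set [4, 3], set ([6] @ [1])) \<union> set [0])"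
  by (rule bb2I[where Ca="(set [5, 0, 1], set ([8, 4] @ [7]))" and Cb="(set [4, 3], set ([6] @ [1]))" and pv="[0, 3]" and pe="[0]" and a=0 and b=3, OF unbI[OF Gc5_c2] unbI[OF Gc5_c1]]) (simp_all add: Gc5_def mk_sg_def path_seq_Cons path_seq_Nil sigma_def insert_commute)

lemma Gc5_cover: "cover6 Gc5 [(set [0, 3, 4, 2, 1, 5], set [0, 1, 2, 5, 7]), (set [0, 1, 5], set [4, 7]), (set [0, 5], set [8]), (set [0, 5], set [8]), (set [0] \<union> fst (set [4, 3, 0, 2], set ([6, 0, 3] @ [2])), set [] \<union> snd (set [4, 3, 0, 2], set ([6, 0, 3] @ [2]))), (set [0, 5, 1, 2, 4] \<union> fst (set [4, 3], set ([6] @ [1])), set [8, 7, 5, 2] \<union> snd (set [4, 3], set ([6] @ [1]))), (set [5, 1, 2, 4] \<union> fst (set [4, 3], set ([6] @ [1])), set [7, 5, 2] \<union> snd (set [4, 3], set ([6] @ [1]))), (set [5, 0] \<union> fst (set [4, 3, 0, 2], set ([6, 0, 3] @ [2])), set [8] \<union> snd (set [4, 3, 0, 2], set ([6, 0, 3] @ [2]))), (set [4, 2, 0, 3], set ([2, 3, 0] @ [1])), (set [2, 1, 0], set ([5, 4] @ [3])), (set [2, 1, 0], set ([5, 4] @ [3])), (set [2, 1, 0], set ([5, 4] @ [3])), (fst (set [5, 0, 1], set ([8, 4] @ [7])) \<union> fst (set [4, 3], set ([6] @ [1])) \<union> set [0, 3], snd (set [5, 0, 1], set ([8, 4] @ [7]))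 \<union> snd (set [4, 3], set ([6] @ [1])) \<union> set [0]), (fst (set [5, 0, 1], set ([8, 4] @ [7])) \<union> fst (set [4, 3], set ([6] @ [1])) \<union> set [0, 3], snd (set [5, 0, 1], set ([8, 4] @ [7])) \<union> snd (set [4, 3], set ([6] @ [1])) \<union> set [0])]"
  unfolding cover6_def by (simp add: Gc5_def mk_sg_def lessThan_nat_numeral lessThan_Suc)

lemma Gc5_psi: "has_psi_star2 Gc5 0 5 8"
proof -
  have "psi_cover Gc5 0 5 2 [(set [0, 3, 4, 2, 1, 5], set [0, 1, 2, 5, 7]), (set [0, 1, 5], set [4, 7])] [(set [0, 5], set [8]), (set [0, 5], set [8])] [(set [0] \<union> fst (set [4, 3, 0, 2], set ([6, 0, 3] @ [2])), set [] \<union> snd (set [4, 3, 0, 2], set ([6, 0, 3] @ [2]))), (set [0, 5, 1, 2, 4] \<union> fst (set [4, 3], set ([6] @ [1])), set [8, 7, 5, 2] \<union> snd (set [4, 3], set ([6] @ [1])))] [(set [5, 1, 2, 4] \<union> fst (set [4, 3], set ([6] @ [1])), set [7, 5, 2] \<union> snd (set [4, 3], set ([6] @ [1]))), (set [5, 0] \<union> fst (set [4, 3, 0, 2], set ([6, 0, 3] @ [2])), set [8] \<union> snd (set [4, 3, 0, 2], set ([6, 0, 3] @ [2])))] [(set [4, 2, 0, 3], set ([2, 3, 0] @ [1])), (set [2, 1, 0], set ([5, 4] @ [3])), (set [2, 1, 0], set ([5, 4] @ [3])), (set [2, 1, 0], set ([5, 4] @ [3])), (fst (set [5, 0, 1],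 set ([8, 4] @ [7])) \<union> fst (set [4, 3], set ([6] @ [1])) \<union> set [0, 3], snd (set [5, 0, 1], set ([8, 4] @ [7])) \<union> snd (set [4, 3], set ([6] @ [1])) \<union> set [0]), (fst (set [5, 0, 1], set ([8, 4] @ [7])) \<union> fst (set [4, 3], set ([6] @ [1])) \<union> set [0, 3], snd (set [5, 0, 1], set ([8, 4] @ [7])) \<union> snd (set [4, 3], set ([6] @ [1])) \<union> set [0])]"
    unfolding psi_cover_def using Gc5_cover Gc5_pp0 Gc5_pp1 Gc5_np0 Gc5_np1 Gc5_t0 Gc5_t1 Gc5_t2 Gc5_t3 Gc5_t1c Gc5_t3c Gc5_s0 Gc5_s1 Gc5_s2 Gc5_s3 Gc5_s4 Gc5_s5 by simp
  moreover have "star_cond Gc5 0 5 8 [(set [0] \<union> fst (set [4, 3, 0, 2], set ([6, 0, 3] @ [2])), set [] \<union> snd (set [4, 3, 0, 2], set ([6, 0, 3] @ [2]))), (set [0, 5, 1, 2, 4] \<union> fst (set [4, 3], set ([6] @ [1])), set [8, 7, 5, 2] \<union> snd (set [4, 3], set ([6] @ [1])))]" unfolding star_cond_def using Gc5_t1c by simp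
  moreover have "star_cond Gc5 5 0 8 [(set [5, 1, 2, 4] \<union> fst (set [4, 3], set ([6] @ [1])), set [7, 5, 2] \<union> snd (set [4, 3], set ([6] @ [1]))), (set [5, 0] \<union> fst (set [4, 3, 0, 2], set ([6, 0, 3] @ [2])), set [8] \<union> snd (set [4, 3, 0, 2], set ([6, 0, 3] @ [2])))]" unfolding star_cond_def using Gc5_t3c by simp
  ultimately show ?thesis unfolding has_psi_star2_def by blast
qed

lemma Gc5_facts: "verts R5 = {..<5}" "edges R5 = {..<7}" "verts Gc5 = {..<Suc 5}" "edges Gc5 = {..<Suc (Suc 7)}"
  "\<forall>j<7. ends Gc5 j = ends R5 j \<and> sgn Gc5 j = sgn R5 j"
  "ends Gc5 7 = {1, 5}" "sgn Gc5 7 = 1" "ends Gc5 (Suc 7) = {0, 5}" "sgn Gc5 (Suc 7) = -1"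
  "\<forall>j<7. ends R5 j = {0, 1} \<longrightarrow> sgn R5 j = 1" "1 < (5::nat)"
  by (simp_all add: Gc5_def R5_def mk_sg_def numeral_eq_Suc All_less_Suc doubleton_eq_iff)


theorem mainTheorem5:
  fixes H G :: "('v,'e) sgraph" and x y z :: 'v and e f1 f2 :: 'e and s1 s2 :: int
  assumes "wf_sgraph H"
    and "x \<in> verts H" and "y \<in> verts H" and "x \<noteq> y"
    and "e \<in> edges H" and "ends H e = {x, y}"
    and "z \<notin> verts H"
    and "f1 \<notin> edges H" and "f2 \<notin> edges H" and "f1 \<noteq> f2"
    and "s1 \<in> {1, -1}" and "s2 \<in> {1, -1}"
    and "G = \<lparr>verts = insert z (verts H), edges = insert f1 (insert f2 (edges H)),
              ends = (ends H)(f1 := {y, z}, f2 := {x, z}),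
              sgn = (sgn H)(f1 := s1, f2 := s2)\<rparr>"
    and "sgn H e * s1 * s2 = -1"
    and "sim_R H x y R2 0 1 \<or> sim_R H x y R4 0 1 \<or> sim_R H x y R5 0 1 \<or> has_psi_star2 H x y e"
  shows "has_psi_star2 G x z f2"
proof -
  have E: "ext H G x y z e f1 f2 s1 s2" unfolding ext_def using assms(1-14) by blast
  have c2: "has_psi_star2 Gc2 0 3 (Suc 4)" using Gc2_psi by simp
  have c4: "has_psi_star2 Gc4 0 4 (Suc 6)" using Gc4_psi by simp
  have c5: "has_psi_star2 Gc5 0 5 (Suc 7)" using Gc5_psi by simp
  from assms(15) show ?thesis
  proof (elim disjE)
    assume "sim_R H x y R2 0 1"
    then show ?thesis using ext.R_case[OF E _ Gc2_facts c2] by blast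
  next
    assume "sim_R H x y R4 0 1"
    then show ?thesis using ext.R_case[OF E _ Gc4_facts c4] by blast
  next
    assume "sim_R H x y R5 0 1"
    then show ?thesis using ext.R_case[OF E _ Gc5_facts c5] by blast
  next
    assume "has_psi_star2 H x y e"
    then show ?thesis using ext.general[OF E] by blast
  qed
qed

end
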